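(* Under the assumptions stated in the context, the function $x_i^{\mathrm{cv}}$ is L-smooth at $\hat{\mathbf{p}}$, and for any $\mathbf{M}=[\mathbf{m}_{(1)}\;\cdots\;\mathbf{m}_{(r)}]\in\mathbb{R}^{n_p\times r}$, the sequence of functions \begin{equation*} \begin{aligned} &[x_i^{\mathrm{cv}}]^{(0)}_{\hat{\mathbf{p}},\mathbf{M}}:\mathbb{R}^{n_p}\to\mathbb{R}:\mathbf{d}\mapsto[x_i^{\mathrm{cv}}]'(\hat{\mathbf{p}};\mathbf{d}),\\ &[x_i^{\mathrm{cv}}]^{(j)}_{\hat{\mathbf{p}},\mathbf{M}}:\mathbb{R}^{n_p}\to\mathbb{R}:\mathbf{d}\mapsto\left[[x_i^{\mathrm{cv}}]^{(j-1)}_{\hat{\mathbf{p}},\mathbf{M}}\right]'(\mathbf{m}_{(j)};\mathbf{d}),\quad \forall j\in\{1,...,r\}, \end{aligned} \end{equation*} is well-defined and given by: for each $j\in\{0,...,r\}$, \begin{equation*} \begin{aligned} [x_i^{\mathrm{cv}}]^{(j)}_{\hat{\mathbf{p}},\mathbf{M}}(\mathbf{d})=\max_{\boldsymbol{\lambda}^{\mathrm{A}},\boldsymbol{\lambda}^{\mathrm{B}}}\quad&[\mathbf{G}\mathbf{d}]^\top\boldsymbol{\lambda}\\ \text{s.t.}\quad& \mathbf{A}^\top\boldsymbol{\lambda}^{\mathrm{A}} + \mathbf{B}^\top\boldsymbol{\lambda}^{\mathrm{B}} = \mathbf{e}^{(i)},\quad \boldsymbol{\lambda}^{\mathrm{A}}\le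 \mathbf{0},\\ &-[\mathbf{G}\mathbf{m}_{(q)}]^\top\boldsymbol{\lambda}\le -[x_i^{\mathrm{cv}}]_{\hat{\mathbf{p}},\mathbf{M}}^{(q-1)}(\mathbf{m}_{(q)}),\quad \forall q\in\{1,\dots,j\}, \end{aligned} \end{equation*} with $\boldsymbol{\lambda} := (\boldsymbol{\lambda}^{\mathrm{A}},\boldsymbol{\lambda}^{\mathrm{B}})$ and $\mathbf{G}:=\begin{bmatrix}\mathbf{G}^{\mathrm{A}}\\\mathbf{G}^{\mathrm{B}}\end{bmatrix}$ (for $j=0$ the last family of constraints is absent). Moreover, for each $j\in\{0,...,r-1\}$ let $D^{(j)}_{\hat{\mathbf{p}},\mathbf{M}}$ be the optimal solution set of the LP defining $[x_i^{\mathrm{cv}}]^{(j)}_{\hat{\mathbf{p}},\mathbf{M}}(\mathbf{m}_{(j+1)})$. Then for each $j\in\{1,...,r-1\}$, \begin{equation*} D^{(j)}_{\hat{\mathbf{p}},\mathbf{M}}\equiv\Big(\arg\max _{\boldsymbol{\lambda}\in D^{(j-1)}_{\hat{\mathbf{p}},\mathbf{M}}}[\mathbf{G}\mathbf{m}_{(j+1)}]^\top\boldsymbol{\lambda}\Big)\subset D^{(j-1)}_{\hat{\mathbf{p}},\mathbf{M}}, \end{equation*} and the LD-derivative of $x_i^{\mathrm{cv}}$ at $\hat{\mathbf{p}}$ in the directions $\mathbf{M}$ is \begin{equation*} [x_i^{\mathrm{cv}}]'(\hat{\mathbf{p}};\mathbf{M})\equiv\boldsymbol{\lambda}^\top\mathbf{G}\mathbf{M},\quad\text{for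 any }\boldsymbol{\lambda}\in D^{(r-1)}_{\hat{\mathbf{p}},\mathbf{M}}. \end{equation*}
   Context: Setting: a residual function $\mathbf{f}:\mathbb{R}^{n_x}\times\mathbb{R}^{n_p}\to\mathbb{R}^{n_x}$, a convex compact set $P\subset\mathbb{R}^{n_p}$, and $Q\subset P$ the (nonempty) set of $\mathbf{p}\in P$ for which $\mathbf{f}(\mathbf{z},\mathbf{p})=\mathbf{0}$ has a solution; an implicit function $\mathbf{x}:Q\to\mathbb{R}^{n_x}$ satisfies $\mathbf{f}(\mathbf{x}(\mathbf{p}),\mathbf{p})=\mathbf{0}$ with $\mathbf{x}(\mathbf{p})\in X:=[\mathbf{x}^{\mathrm{L}},\mathbf{x}^{\mathrm{U}}]$. Given convex/concave relaxations $\mathbf{f}^{\mathrm{cv}},\mathbf{f}^{\mathrm{cc}}$ of $\mathbf{f}$ on $X\times P$, $x_i^{\mathrm{cv}}(\mathbf{p}):=\inf_{\boldsymbol{\xi}\in X}\xi_i$ s.t. $\mathbf{f}^{\mathrm{cv}}(\boldsymbol{\xi},\mathbf{p})\le\mathbf{0}\le\mathbf{f}^{\mathrm{cc}}(\boldsymbol{\xi},\mathbf{p})$. Assume $\mathbf{f}\equiv(\tilde{\mathbf{f}},\mathbf{h})$ with $\mathbf{h}:\mathbb{R}^{n_x}\times\mathbb{R}^{n_p}\to\mathbb{R}^{n_h}$ affine and each $\tilde f_k$ non-affine, whose relaxations are pointwise max of continuously differentiable convex functions (for $\tilde f_k^{\mathrm{cv}}$) and pointwise min of continuously differentiable concave functions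 (for $\tilde f_k^{\mathrm{cc}}$); then $x_i^{\mathrm{cv}}(\mathbf{p})=\min_{\boldsymbol{\xi}\in\mathbb{R}^{n_x}}\xi_i$ s.t. $\mathbf{h}(\boldsymbol{\xi},\mathbf{p})=\mathbf{0}$, $\mathbf{g}(\boldsymbol{\xi},\mathbf{p})\le\mathbf{0}$, where $\mathbf{g}:\mathbb{R}^{n_x}\times\mathbb{R}^{n_p}\to\mathbb{R}^{n_g}$ collects all these smooth inequality constraints and the box constraint $\boldsymbol{\xi}\in X$. At $\hat{\mathbf{p}}\in\mathrm{int}(Q)$ assume the $\boldsymbol{\xi}$-gradients of the components of $\mathbf{h}$ are linearly independent and that a strong Slater condition holds on a neighborhood $N_{\hat{\mathbf{p}}}\subset Q$ (for each $\mathbf{p}\in N_{\hat{\mathbf{p}}}$ there is $\boldsymbol{\xi}_\mathbf{p}\in X$ with $\mathbf{h}(\boldsymbol{\xi}_\mathbf{p},\mathbf{p})=\mathbf{0}$, $\mathbf{g}(\boldsymbol{\xi}_\mathbf{p},\mathbf{p})<\mathbf{0}$). Let $\hat{\boldsymbol{\xi}}$ be any optimal solution of this problem at $\hat{\mathbf{p}}$. Then the directional derivative satisfies $[x_i^{\mathrm{cv}}]'(\hat{\mathbf{p}};\mathbf{d})=\min_{\mathbf{w}\in\mathbb{R}^{n_x}}[\mathbf{e}^{(i)}]^\top\mathbf{w}$ s.t. $\mathbf{A}\mathbf{w}\le\mathbf{G}^{\mathrm{A}}\mathbf{d}$, $\mathbf{B}\mathbf{w}=\mathbf{G}^{\mathrm{B}}\mathbf{d}$,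 where $\mathbf{A}\in\mathbb{R}^{n_A\times n_x}$ has rows $[\nabla_\mathbf{x}g_k(\hat{\boldsymbol{\xi}},\hat{\mathbf{p}})]^\top$ and $\mathbf{G}^{\mathrm{A}}\in\mathbb{R}^{n_A\times n_p}$ has rows $-[\nabla_\mathbf{y}g_k(\hat{\boldsymbol{\xi}},\hat{\mathbf{p}})]^\top$ over the active indices $k$ (those with $g_k(\hat{\boldsymbol{\xi}},\hat{\mathbf{p}})=0$), and $\mathbf{B}\in\mathbb{R}^{n_B\times n_x}$ has rows $[\nabla_\mathbf{x}h_j(\hat{\boldsymbol{\xi}},\hat{\mathbf{p}})]^\top$ and $\mathbf{G}^{\mathrm{B}}\in\mathbb{R}^{n_B\times n_p}$ has rows $-[\nabla_\mathbf{y}h_j(\hat{\boldsymbol{\xi}},\hat{\mathbf{p}})]^\top$ over the components of $\mathbf{h}$; $\nabla_\mathbf{x},\nabla_\mathbf{y}$ denote partial gradients with respect to $\boldsymbol{\xi}$ and $\mathbf{p}$. $\mathbf{e}^{(i)}$ is the $i$th unit coordinate vector. L-smoothness and the LD-derivative $[x_i^{\mathrm{cv}}]'(\hat{\mathbf{p}};\mathbf{M}):=[[x_i^{\mathrm{cv}}]^{(0)}_{\hat{\mathbf{p}},\mathbf{M}}(\mathbf{m}_{(1)})\;\cdots\;[x_i^{\mathrm{cv}}]^{(r-1)}_{\hat{\mathbf{p}},\mathbf{M}}(\mathbf{m}_{(r)})]$ are in the sense of Nesterov and Khan–Barton. *)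

theory Defs
  imports "HOL-Analysis.Analysis"
begin

definition has_dir_deriv :: "('a::real_normed_vector \<Rightarrow> real) \<Rightarrow> 'a \<Rightarrow> 'a \<Rightarrow> real \<Rightarrow> bool" where
  "has_dir_deriv F x d L \<longleftrightarrow> ((\<lambda>t. (F (x + t *\<^sub>R d) - F x) / t) \<longlongrightarrow> L) (at_right 0)"

definition dir_deriv :: "('a::real_normed_vector \<Rightarrow> real) \<Rightarrow> 'a \<Rightarrow> 'a \<Rightarrow> real" where
  "dir_deriv F x d = (THE L. has_dir_deriv F x d L)"

text \<open>Homogenization sequence: ld_seq F x ms 0 = F'(x;.), and
  ld_seq F x ms (j+1) = [ld_seq F x ms j]'(m_(j+1); .), where m_(j+1) = ms ! j.\<close>
fun ld_seq :: "('a::real_normed_vector \<Rightarrow> real) \<Rightarrow> 'a \<Rightarrow> 'a list \<Rightarrow> nat \<Rightarrow> 'a \<Rightarrow> real" where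
  "ld_seq F x ms 0 = (\<lambda>d. dir_deriv F x d)"
| "ld_seq F x ms (Suc j) = (\<lambda>d. dir_deriv (ld_seq F x ms j) (ms ! j) d)"

definition L_smooth_at :: "('a::real_normed_vector \<Rightarrow> real) \<Rightarrow> 'a \<Rightarrow> bool" where
  "L_smooth_at F x \<longleftrightarrow>
     (\<exists>U C. open U \<and> x \<in> U \<and> C-lipschitz_on U F) \<and>
     (\<forall>d. \<exists>L. has_dir_deriv F x d L) \<and>
     (\<forall>ms. \<forall>j < length ms. \<forall>d. \<exists>L. has_dir_deriv (ld_seq F x ms j) (ms ! j) d L)"

definition ld_deriv :: "('a::real_normed_vector \<Rightarrow> real) \<Rightarrow> 'a \<Rightarrow> 'a list \<Rightarrow> real list" where
  "ld_deriv F x ms = map (\<lambda>j. ld_seq F x ms j (ms ! j)) [0..<length ms]"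

definition gradx :: "((real^'x) \<times> (real^'p) \<Rightarrow> real) \<Rightarrow> (real^'x) \<times> (real^'p) \<Rightarrow> real^'x" where
  "gradx F z = (\<chi> k. frechet_derivative F (at z) (axis k 1, 0))"

definition grady :: "((real^'x) \<times> (real^'p) \<Rightarrow> real) \<Rightarrow> (real^'x) \<times> (real^'p) \<Rightarrow> real^'p" where
  "grady F z = (\<chi> k. frechet_derivative F (at z) (0, axis k 1))"

definition C1_fun :: "('a::real_normed_vector \<Rightarrow> real) \<Rightarrow> bool" where
  "C1_fun F \<longleftrightarrow> (\<exists>F'. (\<forall>z. (F has_derivative blinfun_apply (F' z)) (at z)) \<and> continuous_on UNIV F')"

definition affine_fun :: "((real^'x) \<times> (real^'p) \<Rightarrow> real) \<Rightarrow> bool" where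
  "affine_fun F \<longleftrightarrow> (\<exists>a b c. \<forall>\<xi> p. F (\<xi>, p) = a \<bullet> \<xi> + b \<bullet> p + c)"

definition xbox :: "real^'x \<Rightarrow> real^'x \<Rightarrow> (real^'x) set" where
  "xbox xL xU = {\<xi>. \<forall>k. xL $ k \<le> \<xi> $ k \<and> \<xi> $ k \<le> xU $ k}"

definition xcv :: "((real^'x) \<times> (real^'p) \<Rightarrow> real^'x) \<Rightarrow> ((real^'x) \<times> (real^'p) \<Rightarrow> real^'x)
     \<Rightarrow> real^'x \<Rightarrow> real^'x \<Rightarrow> 'x \<Rightarrow> real^'p \<Rightarrow> real" where
  "xcv fcv fcc xL xU i p =
     Inf {\<xi> $ i | \<xi>. \<xi> \<in> xbox xL xU \<and> (\<forall>k. fcv (\<xi>, p) $ k \<le> 0 \<and> 0 \<le> fcc (\<xi>, p) $ k)}"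

text \<open>Index set of the smooth inequality constraints g: convex pieces of the convex
  relaxations, negated concave pieces of the concave relaxations, and the box constraints.\<close>
datatype ('x, 'l) gidx = GA 'x 'l | GB 'x 'l | GLo 'x | GUp 'x

fun gfun :: "('x \<Rightarrow> 'l \<Rightarrow> (real^'x) \<times> (real^'p) \<Rightarrow> real) \<Rightarrow> ('x \<Rightarrow> 'l \<Rightarrow> (real^'x) \<times> (real^'p) \<Rightarrow> real)
     \<Rightarrow> real^'x \<Rightarrow> real^'x \<Rightarrow> ('x, 'l) gidx \<Rightarrow> (real^'x) \<times> (real^'p) \<Rightarrow> real" where
  "gfun a b xL xU (GA k l) z = a k l z"
| "gfun a b xL xU (GB k l) z = - b k l z"
| "gfun a b xL xU (GLo k) z = xL $ k - fst z $ k"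
| "gfun a b xL xU (GUp k) z = fst z $ k - xU $ k"

definition gidxs :: "'x set \<Rightarrow> ('x \<Rightarrow> 'l set) \<Rightarrow> ('x \<Rightarrow> 'l set) \<Rightarrow> ('x, 'l) gidx set" where
  "gidxs Ih La Lb =
     {GA k l | k l. k \<notin> Ih \<and> l \<in> La k} \<union> {GB k l | k l. k \<notin> Ih \<and> l \<in> Lb k}
     \<union> range GLo \<union> range GUp"

definition red_feas :: "((real^'x) \<times> (real^'p) \<Rightarrow> real^'x) \<Rightarrow> 'x set \<Rightarrow> (('x,'l) gidx \<Rightarrow> (real^'x) \<times> (real^'p) \<Rightarrow> real)
     \<Rightarrow> ('x,'l) gidx set \<Rightarrow> real^'p \<Rightarrow> (real^'x) set" where
  "red_feas f Ih g K p = {\<xi>. (\<forall>j\<in>Ih. f (\<xi>, p) $ j = 0) \<and> (\<forall>k\<in>K. g k (\<xi>, p) \<le> 0)}"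

text \<open>Multipliers lam = (lam^A, lam^B), indexed by the active set KA and by the index set JB
  of the equality constraints; entries outside these index sets are fixed to 0.
  Gra k, Grb j are the rows of G^A, G^B; AA k, BB j the rows of A, B.\<close>
definition lp_obj :: "'k set \<Rightarrow> 'j set \<Rightarrow> ('k \<Rightarrow> 'v::real_inner) \<Rightarrow> ('j \<Rightarrow> 'v)
     \<Rightarrow> ('k \<Rightarrow> real) \<times> ('j \<Rightarrow> real) \<Rightarrow> 'v \<Rightarrow> real" where
  "lp_obj KA JB Gra Grb lam d = (\<Sum>k\<in>KA. fst lam k * (Gra k \<bullet> d)) + (\<Sum>j\<in>JB. snd lam j * (Grb j \<bullet> d))"

definition lp_dualfeas :: "'k set \<Rightarrow> 'j set \<Rightarrow> ('k \<Rightarrow> 'w::real_vector) \<Rightarrow> ('j \<Rightarrow> 'w) \<Rightarrow> 'w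
     \<Rightarrow> ('k \<Rightarrow> real) \<times> ('j \<Rightarrow> real) \<Rightarrow> bool" where
  "lp_dualfeas KA JB AA BB e lam \<longleftrightarrow>
     (\<Sum>k\<in>KA. fst lam k *\<^sub>R AA k) + (\<Sum>j\<in>JB. snd lam j *\<^sub>R BB j) = e \<and>
     (\<forall>k\<in>KA. fst lam k \<le> 0) \<and> (\<forall>k. k \<notin> KA \<longrightarrow> fst lam k = 0) \<and> (\<forall>j. j \<notin> JB \<longrightarrow> snd lam j = 0)"

definition lp_feas :: "'k set \<Rightarrow> 'j set \<Rightarrow> ('k \<Rightarrow> 'w::real_vector) \<Rightarrow> ('j \<Rightarrow> 'w) \<Rightarrow> 'w
     \<Rightarrow> ('k \<Rightarrow> 'v::real_inner) \<Rightarrow> ('j \<Rightarrow> 'v) \<Rightarrow> 'v list \<Rightarrow> (nat \<Rightarrow> 'v \<Rightarrow> real) \<Rightarrow> nat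
     \<Rightarrow> (('k \<Rightarrow> real) \<times> ('j \<Rightarrow> real)) set" where
  "lp_feas KA JB AA BB e Gra Grb ms phi j =
     {lam. lp_dualfeas KA JB AA BB e lam \<and>
       (\<forall>q\<in>{1..j}. - lp_obj KA JB Gra Grb lam (ms ! (q - 1)) \<le> - phi (q - 1) (ms ! (q - 1)))}"

definition is_max_val :: "'a set \<Rightarrow> ('a \<Rightarrow> real) \<Rightarrow> real \<Rightarrow> bool" where
  "is_max_val S c v \<longleftrightarrow> (\<exists>x\<in>S. c x = v) \<and> (\<forall>x\<in>S. c x \<le> v)"

definition argmax_set :: "'a set \<Rightarrow> ('a \<Rightarrow> real) \<Rightarrow> 'a set" where
  "argmax_set S c = {x\<in>S. \<forall>y\<in>S. c y \<le> c x}"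

end

theory Submission imports Defs begin

lemma cc_hull_sum:
  fixes G :: "'a::real_vector set"
  assumes "finite K" "\<forall>k\<in>K. 0 \<le> \<mu> k \<and> u k \<in> convex_cone hull G"
  shows "(\<Sum>k\<in>K. \<mu> k *\<^sub>R u k) \<in> convex_cone hull G"
  using assms
proof (induction K rule: finite_induct)
  case empty
  then show ?case by (simp add: convex_cone_hull_contains_0)
next
  case (insert x F)
  then show ?case by (simp add: convex_cone_hull_add convex_cone_hull_mul)
qed

lemma sum_delta_scaleR:
  fixes u :: "'k \<Rightarrow> 'a::real_vector"
  assumes "finite K"
  shows "(\<Sum>k\<in>K. (if k = a then c else 0) *\<^sub>R u k) = (if a \<in> K then c *\<^sub>R u a else 0)"
proof -
  have "(\<Sum>k\<in>K. (if k = a then c else 0) *\<^sub>R u k) = (\<Sum>k\<in>K. (if k = a then c *\<^sub>R u a else 0))"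
    by (rule sum.cong) simp_all
  then show ?thesis using assms by (simp add: sum.delta')
qed

lemma combo_cone:
  fixes u :: "'k \<Rightarrow> 'a::euclidean_space" and v :: "'j \<Rightarrow> 'a"
  assumes fin: "finite K" "finite J"
  defines "C \<equiv> {(\<Sum>k\<in>K. \<mu> k *\<^sub>R u k) + (\<Sum>j\<in>J. \<nu> j *\<^sub>R v j) | \<mu> \<nu>. \<forall>k\<in>K. 0 \<le> \<mu> k}"
  shows "polyhedron C" "convex_cone C" "u ` K \<subseteq> C" "v ` J \<subseteq> C" "uminus ` v ` J \<subseteq> C"
proof -
  define G where "G = u ` K \<union> v ` J \<union> uminus ` v ` J"
  have finG: "finite G" using fin by (simp add: G_def)
  have ccC: "convex_cone C"
    unfolding convex_cone_iff
  proof (intro conjI ballI allI impI)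
    show "0 \<in> C" unfolding C_def
      by (rule CollectI, rule exI[of _ "\<lambda>_. 0"], rule exI[of _ "\<lambda>_. 0"]) simp
  next
    fix x y assume "x \<in> C" "y \<in> C"
    then obtain \<mu>1 \<nu>1 \<mu>2 \<nu>2 where
      x: "x = (\<Sum>k\<in>K. \<mu>1 k *\<^sub>R u k) + (\<Sum>j\<in>J. \<nu>1 j *\<^sub>R v j)" "\<forall>k\<in>K. 0 \<le> \<mu>1 k"
      and y: "y = (\<Sum>k\<in>K. \<mu>2 k *\<^sub>R u k) + (\<Sum>j\<in>J. \<nu>2 j *\<^sub>R v j)" "\<forall>k\<in>K. 0 \<le> \<mu>2 k"
      unfolding C_def by blast
    have "x + y = (\<Sum>k\<in>K. (\<mu>1 k + \<mu>2 k) *\<^sub>R u k) + (\<Sum>j\<in>J. (\<nu>1 j + \<nu>2 j) *\<^sub>R v j)"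
      by (simp add: x y scaleR_add_left sum.distrib algebra_simps)
    then show "x + y \<in> C" unfolding C_def using x(2) y(2)
      by (intro CollectI exI[of _ "\<lambda>k. \<mu>1 k + \<mu>2 k"] exI[of _ "\<lambda>j. \<nu>1 j + \<nu>2 j"]) auto
  next
    fix x :: 'a and c :: real assume "x \<in> C" "0 \<le> c"
    then obtain \<mu>1 \<nu>1 where
      x: "x = (\<Sum>k\<in>K. \<mu>1 k *\<^sub>R u k) + (\<Sum>j\<in>J. \<nu>1 j *\<^sub>R v j)" "\<forall>k\<in>K. 0 \<le> \<mu>1 k"
      unfolding C_def by blast
    have "c *\<^sub>R x = (\<Sum>k\<in>K. (c * \<mu>1 k) *\<^sub>R u k) + (\<Sum>j\<in>J. (c * \<nu>1 j) *\<^sub>R v j)"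
      by (simp add: x scaleR_add_right scaleR_sum_right)
    then show "c *\<^sub>R x \<in> C" unfolding C_def using x(2) \<open>0 \<le> c\<close>
      by (intro CollectI exI[of _ "\<lambda>k. c * \<mu>1 k"] exI[of _ "\<lambda>j. c * \<nu>1 j"]) auto
  qed
  have GC: "G \<subseteq> C"
  proof
    fix x assume "x \<in> G"
    then consider (a) k where "k \<in> K" "x = u k" | (b) j where "j \<in> J" "x = v j"
      | (c) j where "j \<in> J" "x = - v j" unfolding G_def by blast
    then show "x \<in> C"
    proof cases
      case a
      then show ?thesis unfolding C_def using fin
        by (intro CollectI exI[of _ "\<lambda>k'. if k' = k then 1 else 0"] exI[of _ "\<lambda>_. 0"])
          (auto simp: sum_delta_scaleR)
    next
      case b
      then show ?thesis unfolding C_def using fin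
        by (intro CollectI exI[of _ "\<lambda>_. 0"] exI[of _ "\<lambda>j'. if j' = j then 1 else 0"])
          (auto simp: sum_delta_scaleR)
    next
      case c
      then show ?thesis unfolding C_def using fin
        by (intro CollectI exI[of _ "\<lambda>_. 0"] exI[of _ "\<lambda>j'. if j' = j then -1 else 0"])
          (auto simp: sum_delta_scaleR)
    qed
  qed
  have CG: "C \<subseteq> convex_cone hull G"
  proof
    fix x assume "x \<in> C"
    then obtain \<mu> \<nu> where
      x: "x = (\<Sum>k\<in>K. \<mu> k *\<^sub>R u k) + (\<Sum>j\<in>J. \<nu> j *\<^sub>R v j)" "\<forall>k\<in>K. 0 \<le> \<mu> k"
      unfolding C_def by blast
    have 1: "(\<Sum>k\<in>K. \<mu> k *\<^sub>R u k) \<in> convex_cone hull G"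
      using x(2) fin by (intro cc_hull_sum) (auto simp: G_def hull_inc)
    have "(\<Sum>j\<in>J. \<nu> j *\<^sub>R v j) = (\<Sum>j\<in>J. \<bar>\<nu> j\<bar> *\<^sub>R (if 0 \<le> \<nu> j then v j else - v j))"
      by (rule sum.cong) auto
    also have "\<dots> \<in> convex_cone hull G"
      using fin by (intro cc_hull_sum) (auto simp: G_def hull_inc)
    finally show "x \<in> convex_cone hull G" using 1 x(1) by (simp add: convex_cone_hull_add)
  qed
  have "C = convex_cone hull G"
    using CG hull_minimal[of G C convex_cone, OF GC ccC] by blast
  then show "polyhedron C" using polyhedron_convex_cone_hull[OF finG] by simp
  show "convex_cone C" by (rule ccC)
  show "u ` K \<subseteq> C" "v ` J \<subseteq> C" "uminus ` v ` J \<subseteq> C" using GC by (auto simp: G_def)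
qed

lemma farkas:
  fixes u :: "'k \<Rightarrow> 'a::euclidean_space" and v :: "'j \<Rightarrow> 'a"
  assumes fin: "finite K" "finite J"
    and H: "\<And>w. (\<forall>k\<in>K. u k \<bullet> w \<le> 0) \<Longrightarrow> (\<forall>j\<in>J. v j \<bullet> w = 0) \<Longrightarrow> c \<bullet> w \<le> 0"
  shows "\<exists>\<mu> \<nu>. (\<forall>k\<in>K. 0 \<le> \<mu> k) \<and> c = (\<Sum>k\<in>K. \<mu> k *\<^sub>R u k) + (\<Sum>j\<in>J. \<nu> j *\<^sub>R v j)"
proof -
  define C where "C = {(\<Sum>k\<in>K. \<mu> k *\<^sub>R u k) + (\<Sum>j\<in>J. \<nu> j *\<^sub>R v j) | \<mu> \<nu>. \<forall>k\<in>K. 0 \<le> \<mu> k}"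
  note cc = combo_cone[OF fin, where u=u and v=v, folded C_def]
  have ccC: "convex_cone C" by (rule cc(2))
  have clC: "closed C" using cc(1) by (rule polyhedron_imp_closed)
  have GC: "u ` K \<subseteq> C" "v ` J \<subseteq> C" "uminus ` v ` J \<subseteq> C" using cc(3-5) .
  have cvC: "convex C" using ccC by (simp add: convex_cone_def)
  show ?thesis
  proof (rule ccontr)
    assume nex: "\<not> ?thesis"
    have "c \<notin> C" using nex unfolding C_def by blast
    then obtain a b where ab: "a \<bullet> c < b" "\<forall>x\<in>C. b < a \<bullet> x"
      using separating_hyperplane_closed_point[OF cvC clC] by blast
    have "0 \<in> C" using ccC by (simp add: convex_cone_iff)
    then have b0: "b < 0" using ab by auto
    have pos: "0 \<le> a \<bullet> x" if "x \<in> C" for x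
    proof (rule ccontr)
      assume "\<not> 0 \<le> a \<bullet> x"
      then have neg: "a \<bullet> x < 0" by simp
      define t where "t = b / (a \<bullet> x)"
      have "t \<ge> 0" using neg b0 by (simp add: t_def divide_nonpos_neg)
      then have "t *\<^sub>R x \<in> C" using ccC that by (simp add: convex_cone_iff)
      then have "b < t * (a \<bullet> x)" using ab by auto
      also have "t * (a \<bullet> x) = b" using neg by (simp add: t_def)
      finally show False by simp
    qed
    have "c \<bullet> (-a) \<le> 0"
    proof (rule H)
      show "\<forall>k\<in>K. u k \<bullet> - a \<le> 0"
      proof
        fix k assume "k \<in> K"
        then have "0 \<le> a \<bullet> u k" using pos GC by auto
        then show "u k \<bullet> - a \<le> 0" by (simp add: inner_commute)
      qed
      show "\<forall>j\<in>J. v j \<bullet> - a = 0"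
      proof
        fix j assume "j \<in> J"
        then have "v j \<in> C" "- v j \<in> C" using GC by auto
        then have "0 \<le> a \<bullet> v j" "0 \<le> a \<bullet> (- v j)" using pos by blast+
        then show "v j \<bullet> - a = 0" by (simp add: inner_commute)
      qed
    qed
    then show False using ab b0 by (simp add: inner_commute)
  qed
qed

lemma danskin_poly:
  fixes T :: "'a::euclidean_space set" and h :: "'a \<Rightarrow> real"
  assumes poly: "polyhedron T"
    and mx: "\<And>d. is_max_val T (\<lambda>t. t \<bullet> d) (h d)"
  shows "\<exists>t0\<in>T. t0 \<bullet> m = h m \<and> (\<forall>t\<in>T. t \<bullet> m = h m \<longrightarrow> t \<bullet> d \<le> t0 \<bullet> d)
           \<and> has_dir_deriv h m d (t0 \<bullet> d)"
proof -
  have le: "t \<bullet> e \<le> h e" if "t \<in> T" for t e using mx[of e] that by (auto simp: is_max_val_def)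
  have att: "\<exists>t\<in>T. t \<bullet> e = h e" for e using mx[of e] by (auto simp: is_max_val_def)
  define s :: "nat \<Rightarrow> real" where "s n = 1 / real (Suc n)" for n
  have spos: "s n > 0" for n by (simp add: s_def)
  define Fc where "Fc n = T \<inter> {x. x \<bullet> (m + s n *\<^sub>R d) = h (m + s n *\<^sub>R d)}" for n
  have cT: "convex T" using poly by (simp add: polyhedron_imp_convex)
  have face: "Fc n face_of T" for n
  proof -
    have "Fc n = T \<inter> {x. (m + s n *\<^sub>R d) \<bullet> x = h (m + s n *\<^sub>R d)}"
      by (auto simp: Fc_def inner_commute)
    moreover have "(T \<inter> {x. (m + s n *\<^sub>R d) \<bullet> x = h (m + s n *\<^sub>R d)}) face_of T"
      by (rule face_of_Int_supporting_hyperplane_le[OF cT]) (simp add: le inner_commute)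
    ultimately show ?thesis by simp
  qed
  have "finite (Fc ` UNIV)"
    by (rule finite_subset[OF _ finite_polyhedron_faces[OF poly]]) (auto simp: face)
  then obtain y where "y \<in> Fc ` UNIV" and infy: "infinite (Fc -` {y})"
    using inf_img_fin_dom[of Fc UNIV] by auto
  define NS where "NS = Fc -` {y}"
  have unb: "\<exists>n\<in>NS. N \<le> n" for N using infy unfolding NS_def
    using infinite_nat_iff_unbounded_le by (metis vimage_singleton_eq)
  obtain n0 where n0: "n0 \<in> NS" using unb by blast
  obtain t0 where t0y: "t0 \<in> Fc n0"
    using att[of "m + s n0 *\<^sub>R d"] unfolding Fc_def by auto
  have t0F: "t0 \<in> Fc n" if "n \<in> NS" for n using t0y n0 that by (simp add: NS_def)
  have t0T: "t0 \<in> T" using t0y by (simp add: Fc_def)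
  have t0eq: "t0 \<bullet> m + s n * (t0 \<bullet> d) = h (m + s n *\<^sub>R d)" if "n \<in> NS" for n
    using t0F[OF that] by (simp add: Fc_def inner_add_right)
  have key: "t \<bullet> m + s n * (t \<bullet> d) \<le> t0 \<bullet> m + s n * (t0 \<bullet> d)" if "n \<in> NS" "t \<in> T" for n t
    using le[OF that(2), of "m + s n *\<^sub>R d"] t0eq[OF that(1)] by (simp add: inner_add_right)
  have c1: "t \<bullet> m \<le> t0 \<bullet> m" if "t \<in> T" for t
  proof (rule ccontr)
    assume "\<not> ?thesis"
    then have dp: "t \<bullet> m - t0 \<bullet> m > 0" by simp
    define B where "B = \<bar>(t0 - t) \<bullet> d\<bar>"
    obtain N :: nat where N: "B / (t \<bullet> m - t0 \<bullet> m) < real N" using reals_Archimedean2 by blast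
    obtain n where n: "n \<in> NS" "N \<le> n" using unb by blast
    have "t \<bullet> m - t0 \<bullet> m \<le> s n * ((t0 - t) \<bullet> d)"
      using key[OF n(1) that] by (simp add: inner_diff_left algebra_simps)
    also have "\<dots> \<le> s n * B" using spos[of n] by (simp add: B_def mult_left_mono)
    finally have A: "t \<bullet> m - t0 \<bullet> m \<le> B / real (Suc n)" by (simp add: s_def)
    have "B < real N * (t \<bullet> m - t0 \<bullet> m)" using N dp by (simp add: divide_less_eq)
    also have "\<dots> < real (Suc n) * (t \<bullet> m - t0 \<bullet> m)" using n(2) dp by (intro mult_strict_right_mono) auto
    finally have "B / real (Suc n) < t \<bullet> m - t0 \<bullet> m" by (simp add: divide_less_eq mult.commute)
    then show False using A by simp
  qed
  have t0m: "t0 \<bullet> m = h m"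
  proof -
    obtain t1 where "t1 \<in> T" "t1 \<bullet> m = h m" using att by blast
    then show ?thesis using c1[of t1] le[OF t0T, of m] by simp
  qed
  have c2: "t \<bullet> d \<le> t0 \<bullet> d" if "t \<in> T" "t \<bullet> m = h m" for t
    using key[OF n0 that(1)] that(2) t0m spos[of n0] by simp
  have q: "(h (m + x *\<^sub>R d) - h m) / x = t0 \<bullet> d" if "0 < x" "x < s n0" for x
  proof -
    have lo: "h m + x * (t0 \<bullet> d) \<le> h (m + x *\<^sub>R d)"
      using le[OF t0T, of "m + x *\<^sub>R d"] t0m by (simp add: inner_add_right)
    obtain ts where ts: "ts \<in> T" "ts \<bullet> (m + x *\<^sub>R d) = h (m + x *\<^sub>R d)" using att by blast
    define \<theta> where "\<theta> = x / s n0"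
    have th: "0 \<le> \<theta>" "\<theta> \<le> 1" "\<theta> * s n0 = x" using that spos[of n0] by (auto simp: \<theta>_def)
    have "h (m + x *\<^sub>R d) = (1 - \<theta>) * (ts \<bullet> m) + \<theta> * (ts \<bullet> m + s n0 * (ts \<bullet> d))"
    proof -
      have e: "(1 - \<theta>) * (ts \<bullet> m) + \<theta> * (ts \<bullet> m + s n0 * (ts \<bullet> d)) = ts \<bullet> m + (\<theta> * s n0) * (ts \<bullet> d)"
        by (simp add: algebra_simps)
      have "h (m + x *\<^sub>R d) = ts \<bullet> m + x * (ts \<bullet> d)" using ts(2) by (simp add: inner_add_right)
      then show ?thesis unfolding e th(3) .
    qed
    also have "\<dots> \<le> (1 - \<theta>) * h m + \<theta> * (t0 \<bullet> m + s n0 * (t0 \<bullet> d))"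
    proof (rule add_mono)
      show "(1 - \<theta>) * (ts \<bullet> m) \<le> (1 - \<theta>) * h m"
        using le[OF ts(1), of m] th by (intro mult_left_mono) auto
      show "\<theta> * (ts \<bullet> m + s n0 * (ts \<bullet> d)) \<le> \<theta> * (t0 \<bullet> m + s n0 * (t0 \<bullet> d))"
        using key[OF n0 ts(1)] th(1) by (rule mult_left_mono)
    qed
    also have "\<dots> = h m + x * (t0 \<bullet> d)" using t0m th(3) by (simp add: algebra_simps)
    finally have "h (m + x *\<^sub>R d) = h m + x * (t0 \<bullet> d)" using lo by simp
    then show ?thesis using that by simp
  qed
  have "has_dir_deriv h m d (t0 \<bullet> d)"
    unfolding has_dir_deriv_def
  proof (rule tendsto_eventually)
    show "\<forall>\<^sub>F x in at_right 0. (h (m + x *\<^sub>R d) - h m) / x = t0 \<bullet> d"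
      unfolding eventually_at_right_field using spos[of n0] q by blast
  qed
  then show ?thesis using t0T t0m c2 by blast
qed

lemma dir_quot_tendsto:
  fixes F :: "'a::real_normed_vector \<Rightarrow> real"
  assumes D: "(F has_derivative F') (at x)"
  shows "((\<lambda>t. (F (x + t *\<^sub>R u) - F x) / t) \<longlongrightarrow> F' u) (at_right 0)"
proof -
  have l: "((\<lambda>t. x + t *\<^sub>R u) has_derivative (\<lambda>t. t *\<^sub>R u)) (at 0)"
    by (auto intro!: derivative_eq_intros)
  have D0: "(F has_derivative F') (at ((\<lambda>t. x + t *\<^sub>R u) 0))" using D by simp
  have c: "((\<lambda>t. F (x + t *\<^sub>R u)) has_derivative (\<lambda>t. F' (t *\<^sub>R u))) (at 0)"
    using has_derivative_compose[OF l D0] by simp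
  have lin: "linear F'" using D by (rule has_derivative_linear)
  have "(\<lambda>t. F' (t *\<^sub>R u)) = (*) (F' u)"
    using linear.scaleR[OF lin] by (auto simp: fun_eq_iff mult.commute)
  then have "((\<lambda>t. F (x + t *\<^sub>R u)) has_field_derivative F' u) (at 0)"
    using c by (simp add: has_field_derivative_def)
  then have "((\<lambda>h. (F (x + (0 + h) *\<^sub>R u) - F (x + 0 *\<^sub>R u)) / h) \<longlongrightarrow> F' u) (at 0)"
    by (simp add: DERIV_def)
  then have "((\<lambda>t. (F (x + t *\<^sub>R u) - F x) / t) \<longlongrightarrow> F' u) (at 0)" by simp
  then show ?thesis by (rule tendsto_mono[rotated]) (simp add: at_le)
qed

lemma convex_on_deriv_ineq:
  fixes F :: "'a::real_normed_vector \<Rightarrow> real"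
  assumes cv: "convex_on S F" and S: "convex S" and xS: "x \<in> S" and yS: "y \<in> S"
    and D: "(F has_derivative F') (at x)"
  shows "F x + F' (y - x) \<le> F y"
proof -
  have lim: "((\<lambda>t. (F (x + t *\<^sub>R (y - x)) - F x) / t) \<longlongrightarrow> F' (y - x)) (at_right 0)"
    by (rule dir_quot_tendsto[OF D])
  have ev: "\<forall>\<^sub>F t in at_right 0. (F (x + t *\<^sub>R (y - x)) - F x) / t \<le> F y - F x"
    unfolding eventually_at_right_field
  proof (intro exI[of _ 1] conjI allI impI)
    fix t :: real assume t: "0 < t" "t < 1"
    have eq: "x + t *\<^sub>R (y - x) = (1 - t) *\<^sub>R x + t *\<^sub>R y" by (simp add: algebra_simps)
    have "F ((1 - t) *\<^sub>R x + t *\<^sub>R y) \<le> (1 - t) * F x + t * F y"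
      using t xS yS by (intro convex_onD[OF cv]) auto
    then have "F (x + t *\<^sub>R (y - x)) - F x \<le> t * (F y - F x)" unfolding eq by (simp add: algebra_simps)
    then show "(F (x + t *\<^sub>R (y - x)) - F x) / t \<le> F y - F x" using t by (simp add: divide_le_eq mult.commute)
  qed simp
  have "F' (y - x) \<le> F y - F x"
    using tendsto_upperbound[OF lim ev] by simp
  then show ?thesis by simp
qed

lemma lin_vec_expand:
  fixes L :: "real^'n \<Rightarrow> real"
  assumes "linear L"
  shows "L u = (\<chi> k. L (axis k 1)) \<bullet> u"
proof -
  have "L u = L (\<Sum>k\<in>UNIV. u $ k *\<^sub>R axis k 1)"
    using basis_expansion[of u] by (simp add: scalar_mult_eq_scaleR)
  also have "\<dots> = (\<Sum>k\<in>UNIV. u $ k * L (axis k 1))"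
    by (simp add: linear_sum[OF assms] linear_scale[OF assms])
  also have "\<dots> = (\<chi> k. L (axis k 1)) \<bullet> u"
    by (simp add: inner_vec_def mult.commute)
  finally show ?thesis .
qed

lemma grad_decomp:
  fixes F :: "(real^'x) \<times> (real^'p) \<Rightarrow> real"
  assumes D: "(F has_derivative F') (at z)"
  shows "F' (u, v) = gradx F z \<bullet> u + grady F z \<bullet> v"
proof -
  have fe: "frechet_derivative F (at z) = F'" using frechet_derivative_at[OF D] by simp
  have lin: "linear F'" using D by (rule has_derivative_linear)
  have lp1: "linear (\<lambda>u::real^'x. (u, 0::real^'p))" by (rule linearI) auto
  have l1: "linear (\<lambda>u. F' (u, 0))" using linear_compose[OF lp1 lin] by (simp add: o_def)
  have lp2: "linear (\<lambda>v::real^'p. (0::real^'x, v))" by (rule linearI) auto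
  have l2: "linear (\<lambda>v. F' (0, v))" using linear_compose[OF lp2 lin] by (simp add: o_def)
  have "F' (u, v) = F' (u, 0) + F' (0, v)"
    using linear_add[OF lin, of "(u, 0)" "(0, v)"] by simp
  also have "\<dots> = gradx F z \<bullet> u + grady F z \<bullet> v"
    unfolding gradx_def grady_def fe
    using lin_vec_expand[OF l1, of u] lin_vec_expand[OF l2, of v] by simp
  finally show ?thesis .
qed

lemma convex_lipschitz_ball:
  fixes F :: "'a::real_normed_vector \<Rightarrow> real"
  assumes cv: "convex_on (ball x0 (2*r)) F" and r: "r > 0"
    and bnd: "\<And>x y. x \<in> ball x0 (2*r) \<Longrightarrow> y \<in> ball x0 (2*r) \<Longrightarrow> F x - F y \<le> M"
  shows "(M / r)-lipschitz_on (ball x0 r) F"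
proof -
  have M0: "0 \<le> M" using bnd[of x0 x0] r by simp
  have one: "F y - F x \<le> M / r * dist x y" if x: "x \<in> ball x0 r" and y: "y \<in> ball x0 r" for x y
  proof (cases "x = y")
    case True then show ?thesis by simp
  next
    case False
    define \<delta> where "\<delta> = norm (y - x)"
    have dp: "\<delta> > 0" using False by (simp add: \<delta>_def)
    define z where "z = y + (r / \<delta>) *\<^sub>R (y - x)"
    have "dist y z = norm ((r / \<delta>) *\<^sub>R (y - x))" by (simp add: z_def dist_norm)
    then have "dist x0 z \<le> dist x0 y + norm ((r / \<delta>) *\<^sub>R (y - x))"
      using dist_triangle[of x0 z y] by simp
    also have "norm ((r / \<delta>) *\<^sub>R (y - x)) = r" using dp r by (simp add: \<delta>_def)
    finally have zb: "z \<in> ball x0 (2*r)" using y by simp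
    have xb: "x \<in> ball x0 (2*r)" "y \<in> ball x0 (2*r)" using x y r by auto
    define \<theta> where "\<theta> = \<delta> / (\<delta> + r)"
    have th: "0 \<le> \<theta>" "\<theta> \<le> 1" using dp r by (auto simp: \<theta>_def)
    have yeq: "y = (1 - \<theta>) *\<^sub>R x + \<theta> *\<^sub>R z"
    proof -
      have "(1 - \<theta>) *\<^sub>R x + \<theta> *\<^sub>R z = x + (\<theta> * (1 + r / \<delta>)) *\<^sub>R (y - x)"
        by (simp add: z_def algebra_simps)
      also have "\<theta> * (1 + r / \<delta>) = 1"
      proof -
        have "\<delta> * \<delta> + \<delta> * r > 0" using dp r by (simp add: add_pos_pos)
        then show ?thesis using dp r by (simp add: \<theta>_def field_simps)
      qed
      finally show ?thesis by simp
    qed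
    have "F y \<le> (1 - \<theta>) * F x + \<theta> * F z"
      unfolding yeq using th xb zb by (intro convex_onD[OF cv]) auto
    then have "F y - F x \<le> \<theta> * (F z - F x)" by (simp add: algebra_simps)
    also have "\<dots> \<le> \<theta> * M" using bnd[OF zb xb(1)] th by (intro mult_left_mono) auto
    also have "\<theta> \<le> \<delta> / r" using dp r by (simp add: \<theta>_def frac_le)
    then have "\<theta> * M \<le> \<delta> / r * M" using M0 by (intro mult_right_mono)
    also have "\<delta> / r * M = M / r * dist x y" by (simp add: \<delta>_def dist_norm norm_minus_commute)
    finally show ?thesis .
  qed
  show ?thesis
  proof (rule lipschitz_onI)
    fix x y assume "x \<in> ball x0 r" "y \<in> ball x0 r"
    then show "dist (F x) (F y) \<le> M / r * dist x y"
      using one[of x y] one[of y x] by (simp add: dist_real_def dist_commute abs_le_iff)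
  next
    show "0 \<le> M / r" using M0 r by simp
  qed
qed

lemma polyhedron_slice:
  fixes C :: "('a::euclidean_space \<times> 'b::euclidean_space) set"
  assumes "polyhedron C"
  shows "polyhedron {t. (e, t) \<in> C}"
proof -
  obtain F where F: "finite F" "C = \<Inter>F" "\<forall>h\<in>F. \<exists>a b. a \<noteq> 0 \<and> h = {x. a \<bullet> x \<le> b}"
    using assms unfolding polyhedron_def by blast
  have eq: "{t. (e, t) \<in> C} = \<Inter>((\<lambda>h. {t. (e, t) \<in> h}) ` F)" using F(2) by auto
  have "polyhedron {t. (e, t) \<in> h}" if hF: "h \<in> F" for h
  proof -
    obtain a b where h: "h = {x. a \<bullet> x \<le> b}" using bspec[OF F(3) hF] by (elim exE conjE) simp
    obtain a1 a2 where a: "a = (a1, a2)" by (cases a)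
    have "{t. (e, t) \<in> h} = {t. a2 \<bullet> t \<le> b - a1 \<bullet> e}"
      unfolding h a by (simp add: algebra_simps)
    then show ?thesis by (simp add: polyhedron_halfspace_le)
  qed
  then show ?thesis unfolding eq using F(1) by (intro polyhedron_Inter) blast+
qed

lemma sum_pair_scaleR:
  "(\<Sum>k\<in>A. c k *\<^sub>R (a k, b k)) = ((\<Sum>k\<in>A. c k *\<^sub>R a k), (\<Sum>k\<in>A. c k *\<^sub>R b k))"
  by (simp add: prod_eq_iff fst_sum snd_sum)

lemma dir_deriv_eq:
  assumes "has_dir_deriv F x d L"
  shows "dir_deriv F x d = L"
  unfolding dir_deriv_def
proof (rule the_equality)
  show "has_dir_deriv F x d L" by (rule assms)
next
  fix L' assume "has_dir_deriv F x d L'"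
  then show "L' = L" using assms unfolding has_dir_deriv_def
    by (intro tendsto_unique[OF trivial_limit_at_right_real]) auto
qed

theorem theorem5p4:
  fixes f fcv fcc :: "(real^'x::finite) \<times> (real^'p::finite) \<Rightarrow> real^'x"
    and xL xU :: "real^'x"
    and P :: "(real^'p) set"
    and ximp :: "real^'p \<Rightarrow> real^'x"
    and Ih :: "'x set"
    and acv bcc :: "'x \<Rightarrow> 'l \<Rightarrow> (real^'x) \<times> (real^'p) \<Rightarrow> real"
    and La Lb :: "'x \<Rightarrow> 'l set"
    and i :: 'x
    and ph :: "real^'p"
    and \<xi>h :: "real^'x"
  defines "X \<equiv> xbox xL xU"
    and "Q \<equiv> {p \<in> P. \<exists>z. f (z, p) = 0}"
    and "g \<equiv> gfun acv bcc xL xU"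
    and "K \<equiv> gidxs Ih La Lb"
    and "Act \<equiv> {k \<in> gidxs Ih La Lb. gfun acv bcc xL xU k (\<xi>h, ph) = 0}"
    and "AA \<equiv> (\<lambda>k. gradx (gfun acv bcc xL xU k) (\<xi>h, ph))"
    and "GAr \<equiv> (\<lambda>k. - grady (gfun acv bcc xL xU k) (\<xi>h, ph))"
    and "BB \<equiv> (\<lambda>j. gradx (\<lambda>z. f z $ j) (\<xi>h, ph))"
    and "GBr \<equiv> (\<lambda>j. - grady (\<lambda>z. f z $ j) (\<xi>h, ph))"
  assumes P_convex: "convex P" and P_compact: "compact P"
    and Q_nonempty: "Q \<noteq> {}"
    and implicit_fun: "\<forall>p\<in>Q. f (ximp p, p) = 0 \<and> ximp p \<in> X"
    \<comment> \<open>convex/concave relaxations of f on X \<times> P\<close>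
    and fcv_convex: "\<forall>k. convex_on (X \<times> P) (\<lambda>z. fcv z $ k)"
    and fcc_concave: "\<forall>k. concave_on (X \<times> P) (\<lambda>z. fcc z $ k)"
    and relax: "\<forall>z\<in>X \<times> P. \<forall>k. fcv z $ k \<le> f z $ k \<and> f z $ k \<le> fcc z $ k"
    \<comment> \<open>f = (f~, h): h affine (relaxed by itself), each component of f~ non-affine\<close>
    and h_affine: "\<forall>j\<in>Ih. affine_fun (\<lambda>z. f z $ j)"
    and h_relax: "\<forall>j\<in>Ih. \<forall>z\<in>X \<times> P. fcv z $ j = f z $ j \<and> fcc z $ j = f z $ j"
    and ftilde_nonaffine: "\<forall>k. k \<notin> Ih \<longrightarrow> \<not> affine_fun (\<lambda>z. f z $ k)"
    \<comment> \<open>relaxations of f~ as max / min of finitely many C^1 convex / concave functions\<close>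
    and La_fin: "\<forall>k. k \<notin> Ih \<longrightarrow> finite (La k) \<and> La k \<noteq> {}"
    and Lb_fin: "\<forall>k. k \<notin> Ih \<longrightarrow> finite (Lb k) \<and> Lb k \<noteq> {}"
    and fcv_max: "\<forall>k. k \<notin> Ih \<longrightarrow> (\<forall>z\<in>X \<times> P. fcv z $ k = Max ((\<lambda>l. acv k l z) ` La k))"
    and fcc_min: "\<forall>k. k \<notin> Ih \<longrightarrow> (\<forall>z\<in>X \<times> P. fcc z $ k = Min ((\<lambda>l. bcc k l z) ` Lb k))"
    and acv_C1: "\<forall>k l. k \<notin> Ih \<longrightarrow> l \<in> La k \<longrightarrow> C1_fun (acv k l) \<and> convex_on (X \<times> P) (acv k l)"
    and bcc_C1: "\<forall>k l. k \<notin> Ih \<longrightarrow> l \<in> Lb k \<longrightarrow> C1_fun (bcc k l) \<and> concave_on (X \<times> P) (bcc k l)"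
    \<comment> \<open>assumptions at ph\<close>
    and ph_int: "ph \<in> interior Q"
    and LICQ_h: "inj_on BB Ih \<and> independent (BB ` Ih)"
    and slater: "\<exists>N. open N \<and> ph \<in> N \<and> N \<subseteq> Q \<and>
        (\<forall>p\<in>N. \<exists>\<xi>\<in>X. (\<forall>j\<in>Ih. f (\<xi>, p) $ j = 0) \<and> (\<forall>k\<in>K. g k (\<xi>, p) < 0))"
    and xih_opt: "\<xi>h \<in> red_feas f Ih g K ph \<and> (\<forall>\<xi>\<in>red_feas f Ih g K ph. \<xi>h $ i \<le> \<xi> $ i)"
  shows "L_smooth_at (xcv fcv fcc xL xU i) ph \<and>
    (\<forall>ms :: (real^'p) list.
      let \<phi> = ld_seq (xcv fcv fcc xL xU i) ph ms;
          F = lp_feas Act Ih AA BB (axis i 1) GAr GBr ms \<phi>;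
          D = (\<lambda>j. argmax_set (F j) (\<lambda>lam. lp_obj Act Ih GAr GBr lam (ms ! j)))
      in (\<forall>j \<le> length ms. \<forall>d. is_max_val (F j) (\<lambda>lam. lp_obj Act Ih GAr GBr lam d) (\<phi> j d)) \<and>
         (\<forall>j \<in> {1..<length ms}.
            D j = argmax_set (D (j - 1)) (\<lambda>lam. lp_obj Act Ih GAr GBr lam (ms ! j)) \<and>
            D j \<subseteq> D (j - 1)) \<and>
         (ms \<noteq> [] \<longrightarrow> (\<forall>lam \<in> D (length ms - 1).
            ld_deriv (xcv fcv fcc xL xU i) ph ms =
              map (\<lambda>q. lp_obj Act Ih GAr GBr lam (ms ! q)) [0..<length ms])))"
proof -
  let ?v = "xcv fcv fcc xL xU i"
  define e :: "real^'x" where "e = axis i 1"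
  define Gt where "Gt lam = (\<Sum>k\<in>Act. fst lam k *\<^sub>R GAr k) + (\<Sum>j\<in>Ih. snd lam j *\<^sub>R GBr j)"
    for lam :: "(('x, 'l) gidx \<Rightarrow> real) \<times> ('x \<Rightarrow> real)"
  have obj_eq: "lp_obj Act Ih GAr GBr lam d = Gt lam \<bullet> d" for lam d
    by (simp add: lp_obj_def Gt_def inner_add_left inner_sum_left mult.commute)
  have finIh: "finite Ih" by (rule finite_subset[OF subset_UNIV]) simp
  have finK: "finite K"
  proof -
    have "{GA k l | k l. k \<notin> Ih \<and> l \<in> La k} \<subseteq> (\<lambda>(k,l). GA k l) ` (SIGMA k:{k. k\<notin>Ih}. La k)" by auto
    moreover have "finite ((\<lambda>(k,l). GA k l) ` (SIGMA k:{k. k\<notin>Ih}. La k))"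
      using La_fin by (intro finite_imageI finite_SigmaI) auto
    ultimately have 1: "finite {GA k l | k l. k \<notin> Ih \<and> l \<in> La k}" by (rule finite_subset)
    have "{GB k l | k l. k \<notin> Ih \<and> l \<in> Lb k} \<subseteq> (\<lambda>(k,l). GB k l) ` (SIGMA k:{k. k\<notin>Ih}. Lb k)" by auto
    moreover have "finite ((\<lambda>(k,l). GB k l) ` (SIGMA k:{k. k\<notin>Ih}. Lb k))"
      using Lb_fin by (intro finite_imageI finite_SigmaI) auto
    ultimately have 2: "finite {GB k l | k l. k \<notin> Ih \<and> l \<in> Lb k}" by (rule finite_subset)
    show ?thesis unfolding K_def gidxs_def using 1 2 by simp
  qed
  have ActK: "Act \<subseteq> K" unfolding Act_def K_def by auto
  have finAct: "finite Act" using finK ActK by (rule finite_subset[rotated])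
  have XP_convex: "convex (X \<times> P)" using fcv_convex by (simp add: convex_on_def)
  have X_eq: "X = {\<xi>. \<forall>k. xL $ k \<le> \<xi> $ k \<and> \<xi> $ k \<le> xU $ k}" by (simp add: X_def xbox_def)
  have gk_cvx: "convex_on (X \<times> P) (g k)" if kK: "k \<in> K" for k
  proof (cases k)
    case (GA a l)
    then have "a \<notin> Ih" "l \<in> La a" using kK by (auto simp: K_def gidxs_def)
    then have "convex_on (X \<times> P) (acv a l)" using acv_C1 by blast
    moreover have "g k = acv a l" using GA by (simp add: g_def fun_eq_iff)
    ultimately show ?thesis by simp
  next
    case (GB a l)
    then have "a \<notin> Ih" "l \<in> Lb a" using kK by (auto simp: K_def gidxs_def)
    then have "concave_on (X \<times> P) (bcc a l)" using bcc_C1 by blast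
    moreover have "g k = (\<lambda>z. - bcc a l z)" using GB by (simp add: g_def fun_eq_iff)
    ultimately show ?thesis by (simp add: concave_on_def)
  next
    case (GLo a)
    have "g k = (\<lambda>z. xL $ a - fst z $ a)" using GLo by (simp add: g_def fun_eq_iff)
    then show ?thesis using XP_convex
      by (intro convex_onI) (auto simp: algebra_simps)
  next
    case (GUp a)
    have "g k = (\<lambda>z. fst z $ a - xU $ a)" using GUp by (simp add: g_def fun_eq_iff)
    then show ?thesis using XP_convex
      by (intro convex_onI) (auto simp: algebra_simps)
  qed
  have fstnth: "((\<lambda>z::(real^'x)\<times>(real^'p). fst z $ a) has_derivative (\<lambda>w. fst w $ a)) (at z)" for a z
    using bounded_linear.has_derivative[OF bounded_linear_vec_nth has_derivative_fst[OF has_derivative_ident]] .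
  have gk_der0: "\<exists>G'. (g k has_derivative G') (at z)" if kK: "k \<in> K" for k z
  proof (cases k)
    case (GA a l)
    then have "a \<notin> Ih" "l \<in> La a" using kK by (auto simp: K_def gidxs_def)
    then have "C1_fun (acv a l)" using acv_C1 by blast
    then obtain F' where "(acv a l has_derivative blinfun_apply (F' z)) (at z)" unfolding C1_fun_def by blast
    moreover have "g k = acv a l" using GA by (simp add: g_def fun_eq_iff)
    ultimately show ?thesis by auto
  next
    case (GB a l)
    then have "a \<notin> Ih" "l \<in> Lb a" using kK by (auto simp: K_def gidxs_def)
    then have "C1_fun (bcc a l)" using bcc_C1 by blast
    then obtain F' where "(bcc a l has_derivative blinfun_apply (F' z)) (at z)" unfolding C1_fun_def by blast
    then have "((\<lambda>z. - bcc a l z) has_derivative (\<lambda>w. - blinfun_apply (F' z) w)) (at z)"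
      by (rule has_derivative_minus)
    moreover have "g k = (\<lambda>z. - bcc a l z)" using GB by (simp add: g_def fun_eq_iff)
    ultimately show ?thesis by auto
  next
    case (GLo a)
    have "g k = (\<lambda>z. xL $ a - fst z $ a)" using GLo by (simp add: g_def fun_eq_iff)
    moreover have "((\<lambda>z. xL $ a - fst z $ a) has_derivative (\<lambda>w. 0 - fst w $ a)) (at z)"
      by (intro has_derivative_diff has_derivative_const fstnth)
    ultimately show ?thesis by auto
  next
    case (GUp a)
    have "g k = (\<lambda>z. fst z $ a - xU $ a)" using GUp by (simp add: g_def fun_eq_iff)
    moreover have "((\<lambda>z. fst z $ a - xU $ a) has_derivative (\<lambda>w. fst w $ a - 0)) (at z)"
      by (intro has_derivative_diff has_derivative_const fstnth)
    ultimately show ?thesis by auto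
  qed
  have gk_der: "(g k has_derivative (\<lambda>w. gradx (g k) z \<bullet> fst w + grady (g k) z \<bullet> snd w)) (at z)"
    if kK: "k \<in> K" for k z
  proof -
    obtain G' where G': "(g k has_derivative G') (at z)" using gk_der0[OF kK] by blast
    have "G' = (\<lambda>w. gradx (g k) z \<bullet> fst w + grady (g k) z \<bullet> snd w)"
      using grad_decomp[OF G'] by (auto simp: fun_eq_iff)
    then show ?thesis using G' by simp
  qed
  have AA_eq: "AA k = gradx (g k) (\<xi>h, ph)" for k by (simp add: AA_def g_def)
  have GAr_eq: "GAr k = - grady (g k) (\<xi>h, ph)" for k by (simp add: GAr_def g_def)
  have phQ: "ph \<in> Q" using ph_int interior_subset by blast
  have QP: "Q \<subseteq> P" by (auto simp: Q_def)
  have phP: "ph \<in> P" using phQ QP by blast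
  have gK_iff: "(\<forall>k\<in>K. g k z \<le> 0) \<longleftrightarrow>
      (\<forall>a l. a \<notin> Ih \<longrightarrow> l \<in> La a \<longrightarrow> acv a l z \<le> 0) \<and>
      (\<forall>a l. a \<notin> Ih \<longrightarrow> l \<in> Lb a \<longrightarrow> 0 \<le> bcc a l z) \<and> fst z \<in> X" for z
  proof -
    have inK: "GA a l \<in> K" if "a \<notin> Ih" "l \<in> La a" for a l using that by (auto simp: K_def gidxs_def)
    have inK2: "GB a l \<in> K" if "a \<notin> Ih" "l \<in> Lb a" for a l using that by (auto simp: K_def gidxs_def)
    have inK3: "GLo a \<in> K" "GUp a \<in> K" for a by (auto simp: K_def gidxs_def)
    have Kcases: "(\<exists>a l. k = GA a l \<and> a \<notin> Ih \<and> l \<in> La a) \<or> (\<exists>a l. k = GB a l \<and> a \<notin> Ih \<and> l \<in> Lb a)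
        \<or> (\<exists>a. k = GLo a) \<or> (\<exists>a. k = GUp a)" if "k \<in> K" for k
      using that by (auto simp: K_def gidxs_def)
    show ?thesis
    proof
      assume H: "\<forall>k\<in>K. g k z \<le> 0"
      have 1: "\<forall>a l. a \<notin> Ih \<longrightarrow> l \<in> La a \<longrightarrow> acv a l z \<le> 0"
        using H inK by (force simp: g_def)
      have 2: "\<forall>a l. a \<notin> Ih \<longrightarrow> l \<in> Lb a \<longrightarrow> 0 \<le> bcc a l z"
        using H inK2 by (force simp: g_def)
      have "xL $ a \<le> fst z $ a \<and> fst z $ a \<le> xU $ a" for a
        using H inK3[of a] by (force simp: g_def)
      then show "(\<forall>a l. a \<notin> Ih \<longrightarrow> l \<in> La a \<longrightarrow> acv a l z \<le> 0) \<and>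
        (\<forall>a l. a \<notin> Ih \<longrightarrow> l \<in> Lb a \<longrightarrow> 0 \<le> bcc a l z) \<and> fst z \<in> X" using 1 2 by (simp add: X_eq)
    next
      assume H: "(\<forall>a l. a \<notin> Ih \<longrightarrow> l \<in> La a \<longrightarrow> acv a l z \<le> 0) \<and>
        (\<forall>a l. a \<notin> Ih \<longrightarrow> l \<in> Lb a \<longrightarrow> 0 \<le> bcc a l z) \<and> fst z \<in> X"
      show "\<forall>k\<in>K. g k z \<le> 0"
      proof
        fix k assume "k \<in> K"
        then show "g k z \<le> 0" using Kcases[of k] H by (auto simp: g_def X_eq)
      qed
    qed
  qed
  have xih_feas: "\<forall>j\<in>Ih. f (\<xi>h, ph) $ j = 0" "\<forall>k\<in>K. g k (\<xi>h, ph) \<le> 0"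
    using xih_opt by (auto simp: red_feas_def)
  have xihX: "\<xi>h \<in> X" using xih_feas(2) gK_iff[of "(\<xi>h, ph)"] by simp
  have xihXP: "(\<xi>h, ph) \<in> X \<times> P" using xihX phP by simp
  have g_ineq: "g k (\<xi>h, ph) + AA k \<bullet> (\<xi> - \<xi>h) - GAr k \<bullet> (p - ph) \<le> g k (\<xi>, p)"
    if kK: "k \<in> K" and xX: "\<xi> \<in> X" and pP: "p \<in> P" for k \<xi> p
  proof -
    have "(\<xi>, p) \<in> X \<times> P" using xX pP by simp
    from convex_on_deriv_ineq[OF gk_cvx[OF kK] XP_convex xihXP this gk_der[OF kK]]
    show ?thesis by (simp add: AA_eq GAr_eq)
  qed
  have hlin: "f (\<xi>, p) $ j = f (\<xi>h, ph) $ j + BB j \<bullet> (\<xi> - \<xi>h) - GBr j \<bullet> (p - ph)"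
    if jI: "j \<in> Ih" for j \<xi> p
  proof -
    obtain a b c where abc: "\<forall>\<xi> p. f (\<xi>, p) $ j = a \<bullet> \<xi> + b \<bullet> p + c"
      using h_affine jI unfolding affine_fun_def by blast
    have feq: "(\<lambda>z. f z $ j) = (\<lambda>z. a \<bullet> fst z + b \<bullet> snd z + c)"
    proof
      fix z :: "(real^'x) \<times> (real^'p)" show "f z $ j = a \<bullet> fst z + b \<bullet> snd z + c"
        using abc[rule_format, of "fst z" "snd z"] by simp
    qed
    have D: "((\<lambda>z. f z $ j) has_derivative (\<lambda>w. a \<bullet> fst w + b \<bullet> snd w + 0)) (at (\<xi>h, ph))"
      unfolding feq
      by (intro has_derivative_add has_derivative_const
          bounded_linear.has_derivative[OF bounded_linear_inner_right has_derivative_fst[OF has_derivative_ident]]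
          bounded_linear.has_derivative[OF bounded_linear_inner_right has_derivative_snd[OF has_derivative_ident]])
    have "a \<bullet> (\<xi> - \<xi>h) + b \<bullet> (p - ph) = BB j \<bullet> (\<xi> - \<xi>h) - GBr j \<bullet> (p - ph)"
      using grad_decomp[OF D, of "\<xi> - \<xi>h" "p - ph"] by (simp add: BB_def GBr_def)
    then show ?thesis using abc by (simp add: inner_diff_right algebra_simps)
  qed
  have feas_iff: "(\<xi> \<in> X \<and> (\<forall>k. fcv (\<xi>, p) $ k \<le> 0 \<and> 0 \<le> fcc (\<xi>, p) $ k)) \<longleftrightarrow> \<xi> \<in> red_feas f Ih g K p"
    if pP: "p \<in> P" for \<xi> p
  proof
    assume A: "\<xi> \<in> X \<and> (\<forall>k. fcv (\<xi>, p) $ k \<le> 0 \<and> 0 \<le> fcc (\<xi>, p) $ k)"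
    then have xp: "(\<xi>, p) \<in> X \<times> P" using pP by simp
    have 1: "\<forall>j\<in>Ih. f (\<xi>, p) $ j = 0"
    proof
      fix j assume "j \<in> Ih"
      then show "f (\<xi>, p) $ j = 0" using h_relax xp A by (metis order_antisym)
    qed
    have 2: "acv a l (\<xi>, p) \<le> 0" if "a \<notin> Ih" "l \<in> La a" for a l
    proof -
      have "acv a l (\<xi>, p) \<le> Max ((\<lambda>l. acv a l (\<xi>, p)) ` La a)"
        using La_fin that by (intro Max_ge) auto
      also have "\<dots> = fcv (\<xi>, p) $ a" using fcv_max that xp by simp
      finally show ?thesis using A by (meson order_trans)
    qed
    have 3: "0 \<le> bcc a l (\<xi>, p)" if "a \<notin> Ih" "l \<in> Lb a" for a l
    proof -
      have "fcc (\<xi>, p) $ a = Min ((\<lambda>l. bcc a l (\<xi>, p)) ` Lb a)" using fcc_min that xp by simp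
      also have "\<dots> \<le> bcc a l (\<xi>, p)"
        using Lb_fin that by (intro Min_le) auto
      finally show ?thesis using A by (meson order_trans)
    qed
    show "\<xi> \<in> red_feas f Ih g K p"
      unfolding red_feas_def using 1 2 3 A gK_iff[of "(\<xi>, p)"] by auto
  next
    assume B: "\<xi> \<in> red_feas f Ih g K p"
    then have B1: "\<forall>j\<in>Ih. f (\<xi>, p) $ j = 0" and B2: "\<forall>k\<in>K. g k (\<xi>, p) \<le> 0"
      by (auto simp: red_feas_def)
    then have xX: "\<xi> \<in> X" using gK_iff[of "(\<xi>, p)"] by simp
    then have xp: "(\<xi>, p) \<in> X \<times> P" using pP by simp
    have "fcv (\<xi>, p) $ k \<le> 0 \<and> 0 \<le> fcc (\<xi>, p) $ k" for k
    proof (cases "k \<in> Ih")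
      case True
      then show ?thesis using h_relax xp B1 by simp
    next
      case False
      have "fcv (\<xi>, p) $ k = Max ((\<lambda>l. acv k l (\<xi>, p)) ` La k)" using fcv_max False xp by simp
      also have "\<dots> \<le> 0" using La_fin False B2 gK_iff[of "(\<xi>, p)"] by (subst Max_le_iff) auto
      finally have c1: "fcv (\<xi>, p) $ k \<le> 0" .
      have "0 \<le> Min ((\<lambda>l. bcc k l (\<xi>, p)) ` Lb k)"
        using Lb_fin False B2 gK_iff[of "(\<xi>, p)"] by (subst Min_ge_iff) auto
      also have "\<dots> = fcc (\<xi>, p) $ k" using fcc_min False xp by simp
      finally show ?thesis using c1 by simp
    qed
    then show "\<xi> \<in> X \<and> (\<forall>k. fcv (\<xi>, p) $ k \<le> 0 \<and> 0 \<le> fcc (\<xi>, p) $ k)" using xX by simp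
  qed
  define Sset where "Sset p = {\<xi> $ i |\<xi>. \<xi> \<in> X \<and> (\<forall>k. fcv (\<xi>, p) $ k \<le> 0 \<and> 0 \<le> fcc (\<xi>, p) $ k)}" for p
  have v_eq: "?v p = Inf (Sset p)" for p by (simp add: xcv_def Sset_def X_def)
  have S_ne: "Sset p \<noteq> {}" if pQ: "p \<in> Q" for p
  proof -
    have xX: "ximp p \<in> X" and f0: "f (ximp p, p) = 0" using implicit_fun pQ by auto
    have "(ximp p, p) \<in> X \<times> P" using xX pQ QP by auto
    then have "\<forall>k. fcv (ximp p, p) $ k \<le> 0 \<and> 0 \<le> fcc (ximp p, p) $ k" using relax f0 by (metis zero_index)
    then show ?thesis using xX unfolding Sset_def by blast
  qed
  have S_bdd: "bdd_below (Sset p)" for p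
    unfolding Sset_def by (rule bdd_belowI[of _ "xL $ i"]) (auto simp: X_eq)
  have v_le: "?v p \<le> \<xi> $ i" if "\<xi> \<in> X" "\<forall>k. fcv (\<xi>, p) $ k \<le> 0 \<and> 0 \<le> fcc (\<xi>, p) $ k" for \<xi> p
    unfolding v_eq using that by (intro cInf_lower[OF _ S_bdd]) (auto simp: Sset_def)
  have v_lo: "xL $ i \<le> ?v p" if "p \<in> Q" for p
    unfolding v_eq using S_ne[OF that] by (intro cInf_greatest) (auto simp: Sset_def X_eq)
  have v_hi: "?v p \<le> xU $ i" if pQ: "p \<in> Q" for p
  proof -
    obtain y where "y \<in> Sset p" using S_ne[OF pQ] by blast
    then obtain \<xi> where xi: "\<xi> \<in> X" "\<forall>k. fcv (\<xi>, p) $ k \<le> 0 \<and> 0 \<le> fcc (\<xi>, p) $ k" unfolding Sset_def by blast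
    have "\<xi> $ i \<le> xU $ i" using xi(1) by (simp add: X_eq)
    then show ?thesis using v_le[OF xi] by linarith
  qed
  have v_ph: "?v ph = \<xi>h $ i"
    unfolding v_eq
  proof (rule cInf_eq_minimum)
    show "\<xi>h $ i \<in> Sset ph" using feas_iff[OF phP, of \<xi>h] xih_opt unfolding Sset_def by blast
  next
    fix y assume "y \<in> Sset ph"
    then obtain \<xi> where "y = \<xi> $ i" "\<xi> \<in> X" "\<forall>k. fcv (\<xi>, ph) $ k \<le> 0 \<and> 0 \<le> fcc (\<xi>, ph) $ k"
      unfolding Sset_def by blast
    then show "\<xi>h $ i \<le> y" using feas_iff[OF phP, of \<xi>] xih_opt by blast
  qed
  have e_inner: "e \<bullet> w = w $ i" for w by (simp add: e_def inner_axis')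
  have combo_inner: "((\<Sum>k\<in>Act. c k *\<^sub>R x k) + (\<Sum>j\<in>Ih. c' j *\<^sub>R y j)) \<bullet> w
      = (\<Sum>k\<in>Act. c k * (x k \<bullet> w)) + (\<Sum>j\<in>Ih. c' j * (y j \<bullet> w))"
    for c x c' y and w :: "'z::real_inner"
    by (simp add: inner_add_left inner_sum_left)
  have Gt_inner: "Gt lam \<bullet> w = (\<Sum>k\<in>Act. fst lam k * (GAr k \<bullet> w)) + (\<Sum>j\<in>Ih. snd lam j * (GBr j \<bullet> w))" for lam w
    unfolding Gt_def by (rule combo_inner)
  have act0: "g k (\<xi>h, ph) = 0" if "k \<in> Act" for k using that by (simp add: Act_def g_def)
  have LB: "\<xi>h $ i + Gt lam \<bullet> (p - ph) \<le> ?v p"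
    if lam: "lp_dualfeas Act Ih AA BB e lam" and pQ: "p \<in> Q" for lam p
    unfolding v_eq
  proof (rule cInf_greatest[OF S_ne[OF pQ]])
    fix y assume "y \<in> Sset p"
    then obtain \<xi> where y: "y = \<xi> $ i" and xX: "\<xi> \<in> X" and cnd: "\<forall>k. fcv (\<xi>, p) $ k \<le> 0 \<and> 0 \<le> fcc (\<xi>, p) $ k"
      unfolding Sset_def by blast
    have pP: "p \<in> P" using pQ QP by blast
    have rf: "\<xi> \<in> red_feas f Ih g K p" using feas_iff[OF pP] xX cnd by blast
    have le1: "fst lam k * (GAr k \<bullet> (p - ph)) \<le> fst lam k * (AA k \<bullet> (\<xi> - \<xi>h))" if kA: "k \<in> Act" for k
    proof -
      have kK: "k \<in> K" using kA ActK by blast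
      have "g k (\<xi>, p) \<le> 0" using rf kK by (simp add: red_feas_def)
      then have "AA k \<bullet> (\<xi> - \<xi>h) \<le> GAr k \<bullet> (p - ph)" using g_ineq[OF kK xX pP] act0[OF kA] by simp
      moreover have "fst lam k \<le> 0" using lam kA by (simp add: lp_dualfeas_def)
      ultimately show ?thesis by (simp add: mult_left_mono_neg)
    qed
    have eq2: "BB j \<bullet> (\<xi> - \<xi>h) = GBr j \<bullet> (p - ph)" if jI: "j \<in> Ih" for j
      using hlin[OF jI, of \<xi> p] rf xih_feas(1) jI by (simp add: red_feas_def)
    have "\<xi>h $ i + Gt lam \<bullet> (p - ph) = \<xi>h $ i + ((\<Sum>k\<in>Act. fst lam k * (GAr k \<bullet> (p - ph))) + (\<Sum>j\<in>Ih. snd lam j * (GBr j \<bullet> (p - ph))))"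
      by (simp add: Gt_inner)
    also have "\<dots> \<le> \<xi>h $ i + ((\<Sum>k\<in>Act. fst lam k * (AA k \<bullet> (\<xi> - \<xi>h))) + (\<Sum>j\<in>Ih. snd lam j * (BB j \<bullet> (\<xi> - \<xi>h))))"
      using le1 eq2 by (intro add_left_mono add_mono sum_mono) auto
    also have "(\<Sum>k\<in>Act. fst lam k * (AA k \<bullet> (\<xi> - \<xi>h))) + (\<Sum>j\<in>Ih. snd lam j * (BB j \<bullet> (\<xi> - \<xi>h)))
        = e \<bullet> (\<xi> - \<xi>h)"
    proof -
      have eeq: "(\<Sum>k\<in>Act. fst lam k *\<^sub>R AA k) + (\<Sum>j\<in>Ih. snd lam j *\<^sub>R BB j) = e"
        using lam by (simp add: lp_dualfeas_def)
      show ?thesis using combo_inner[of "fst lam" AA "snd lam" BB "\<xi> - \<xi>h"] unfolding eeq by simp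
    qed
    also have "\<xi>h $ i + e \<bullet> (\<xi> - \<xi>h) = y" by (simp add: e_inner y)
    finally show "\<xi>h $ i + Gt lam \<bullet> (p - ph) \<le> y" .
  qed
  obtain rQ where rQ: "rQ > 0" "ball ph rQ \<subseteq> Q" using ph_int mem_interior by blast
  have evQ: "\<forall>\<^sub>F t in at_right 0. ph + t *\<^sub>R d \<in> Q" for d
  proof -
    have "\<forall>t. 0 < t \<and> t < rQ / (norm d + 1) \<longrightarrow> ph + t *\<^sub>R d \<in> Q"
    proof (intro allI impI)
      fix t :: real assume t: "0 < t \<and> t < rQ / (norm d + 1)"
      have "t * norm d \<le> t * (norm d + 1)" using t by simp
      also have "\<dots> < rQ"
      proof -
        have np: "0 < norm d + 1" using norm_ge_zero[of d] by linarith
        then show ?thesis using t by (simp add: less_divide_eq)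
      qed
      finally have "dist ph (ph + t *\<^sub>R d) < rQ" using t by (simp add: dist_norm)
      then show "ph + t *\<^sub>R d \<in> Q" using rQ by auto
    qed
    moreover have "rQ / (norm d + 1) > 0" using rQ norm_ge_zero[of d] by (intro divide_pos_pos) linarith+
    ultimately show ?thesis unfolding eventually_at_right_field by (intro exI[of _ "rQ / (norm d + 1)"]) auto
  qed
  obtain N where N: "open N" "ph \<in> N" "N \<subseteq> Q"
    and slN: "\<forall>p\<in>N. \<exists>\<xi>\<in>X. (\<forall>j\<in>Ih. f (\<xi>, p) $ j = 0) \<and> (\<forall>k\<in>K. g k (\<xi>, p) < 0)"
    using slater by blast
  obtain \<xi>s where xsX: "\<xi>s \<in> X" and xs_h: "\<forall>j\<in>Ih. f (\<xi>s, ph) $ j = 0" and xs_g: "\<forall>k\<in>K. g k (\<xi>s, ph) < 0"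
    using slN N(2) by blast
  define z where "z = \<xi>s - \<xi>h"
  have Az: "AA k \<bullet> z < 0" if kA: "k \<in> Act" for k
  proof -
    have kK: "k \<in> K" using kA ActK by blast
    have "g k (\<xi>h, ph) + AA k \<bullet> z - GAr k \<bullet> (ph - ph) \<le> g k (\<xi>s, ph)"
      unfolding z_def by (rule g_ineq[OF kK xsX phP])
    then show ?thesis using act0[OF kA] xs_g kK by auto
  qed
  have Bz: "BB j \<bullet> z = 0" if jI: "j \<in> Ih" for j
    using hlin[OF jI, of \<xi>s ph] xs_h xih_feas(1) jI by (simp add: z_def)
  have UB: "\<forall>\<^sub>F t in at_right 0. ?v (ph + t *\<^sub>R d) \<le> \<xi>h $ i + t * (w $ i + \<eta>)"
    if wA: "\<forall>k\<in>Act. AA k \<bullet> w \<le> GAr k \<bullet> d" and wB: "\<forall>j\<in>Ih. BB j \<bullet> w = GBr j \<bullet> d" and eta: "\<eta> > 0"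
    for d w \<eta>
  proof -
    define \<epsilon> where "\<epsilon> = \<eta> / (\<bar>z $ i\<bar> + 1)"
    have ep: "\<epsilon> > 0" unfolding \<epsilon>_def using eta by (intro divide_pos_pos) auto
    have epz: "\<epsilon> * z $ i \<le> \<eta>"
    proof -
      have "\<epsilon> * z $ i \<le> \<epsilon> * (\<bar>z $ i\<bar> + 1)" using ep by (intro mult_left_mono) auto
      also have "\<dots> = \<eta>" by (simp add: \<epsilon>_def)
      finally show ?thesis .
    qed
    define w' where "w' = w + \<epsilon> *\<^sub>R z"
    have w'A: "AA k \<bullet> w' - GAr k \<bullet> d < 0" if kA: "k \<in> Act" for k
    proof -
      have "\<epsilon> * (AA k \<bullet> z) < 0" using Az[OF kA] ep by (simp add: mult_pos_neg)
      moreover have "AA k \<bullet> w \<le> GAr k \<bullet> d" using wA kA by blast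
      ultimately show ?thesis by (simp add: w'_def inner_add_right)
    qed
    have w'B: "BB j \<bullet> w' = GBr j \<bullet> d" if jI: "j \<in> Ih" for j
      using wB jI Bz[OF jI] by (simp add: w'_def inner_add_right)
    define zt where "zt t = (\<xi>h, ph) + t *\<^sub>R (w', d)" for t :: real
    have zt_eq: "zt t = (\<xi>h + t *\<^sub>R w', ph + t *\<^sub>R d)" for t by (simp add: zt_def)
    have evg: "\<forall>\<^sub>F t in at_right 0. g k (zt t) < 0" if kK: "k \<in> K" for k
    proof (cases "k \<in> Act")
      case True
      have lim: "((\<lambda>t. (g k ((\<xi>h, ph) + t *\<^sub>R (w', d)) - g k (\<xi>h, ph)) / t) \<longlongrightarrow>
          gradx (g k) (\<xi>h, ph) \<bullet> w' + grady (g k) (\<xi>h, ph) \<bullet> d) (at_right 0)"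
        using dir_quot_tendsto[OF gk_der[OF kK, of "(\<xi>h, ph)"], where u="(w', d)"] by simp
      have "gradx (g k) (\<xi>h, ph) \<bullet> w' + grady (g k) (\<xi>h, ph) \<bullet> d = AA k \<bullet> w' - GAr k \<bullet> d"
        by (simp add: AA_eq GAr_eq)
      then have "\<forall>\<^sub>F t in at_right 0. (g k (zt t) - g k (\<xi>h, ph)) / t < 0"
        using order_tendstoD(2)[OF lim] w'A[OF True] by (simp add: zt_def)
      then show ?thesis using eventually_at_right_less[of "0::real"]
        by eventually_elim (simp add: act0[OF True] divide_less_0_iff)
    next
      case False
      have neg: "g k (\<xi>h, ph) < 0" using False xih_feas(2) kK by (auto simp: Act_def K_def g_def le_less)
      have cont: "isCont (g k) (\<xi>h, ph)" using gk_der[OF kK, of "(\<xi>h, ph)"] by (rule has_derivative_continuous)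
      have "(zt \<longlongrightarrow> (\<xi>h, ph)) (at_right 0)"
      proof -
        have "((\<lambda>t. (\<xi>h, ph) + t *\<^sub>R (w', d)) \<longlongrightarrow> (\<xi>h, ph) + 0 *\<^sub>R (w', d)) (at_right 0)"
          by (intro tendsto_intros)
        moreover have "zt = (\<lambda>t. (\<xi>h, ph) + t *\<^sub>R (w', d))" by (simp add: zt_def fun_eq_iff)
        ultimately show ?thesis by simp
      qed
      then have "((\<lambda>t. g k (zt t)) \<longlongrightarrow> g k (\<xi>h, ph)) (at_right 0)"
        by (rule isCont_tendsto_compose[OF cont])
      then show ?thesis using order_tendstoD(2) neg by blast
    qed
    have evall: "\<forall>\<^sub>F t in at_right 0. \<forall>k\<in>K. g k (zt t) < 0"
      using evg finK by (intro eventually_ball_finite) auto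
    show ?thesis
      using evall evQ[of d] eventually_at_right_less[of "0::real"]
    proof eventually_elim
      case (elim t)
      have pP: "ph + t *\<^sub>R d \<in> P" using elim QP by blast
      have "\<xi>h + t *\<^sub>R w' \<in> red_feas f Ih g K (ph + t *\<^sub>R d)"
        unfolding red_feas_def
      proof (intro CollectI conjI ballI)
        fix j assume jI: "j \<in> Ih"
        show "f (\<xi>h + t *\<^sub>R w', ph + t *\<^sub>R d) $ j = 0"
          using hlin[OF jI, of "\<xi>h + t *\<^sub>R w'" "ph + t *\<^sub>R d"] xih_feas(1) jI w'B[OF jI]
          by (simp add: inner_scaleR_right)
      next
        fix k assume "k \<in> K"
        then show "g k (\<xi>h + t *\<^sub>R w', ph + t *\<^sub>R d) \<le> 0" using elim zt_eq by (metis less_imp_le)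
      qed
      then have "?v (ph + t *\<^sub>R d) \<le> (\<xi>h + t *\<^sub>R w') $ i"
        using feas_iff[OF pP] v_le by blast
      also have "\<dots> = \<xi>h $ i + t * (w $ i + \<epsilon> * z $ i)" by (simp add: w'_def algebra_simps)
      also have "\<dots> \<le> \<xi>h $ i + t * (w $ i + \<eta>)" using epz elim by (intro add_left_mono mult_left_mono) auto
      finally show ?case .
    qed
  qed
  have rec_nonneg: "0 \<le> w $ i" if wA: "\<forall>k\<in>Act. AA k \<bullet> w \<le> 0" and wB: "\<forall>j\<in>Ih. BB j \<bullet> w = 0" for w
  proof (rule ccontr)
    assume "\<not> 0 \<le> w $ i"
    then have neg: "w $ i < 0" by simp
    have "\<forall>\<^sub>F t in at_right 0. ?v (ph + t *\<^sub>R 0) \<le> \<xi>h $ i + t * (w $ i + (- w $ i / 2))"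
      using wA wB neg by (intro UB) auto
    then have "\<forall>\<^sub>F t in at_right (0::real). False"
      using eventually_at_right_less[of "0::real"]
    proof eventually_elim
      case (elim t)
      then have "\<xi>h $ i \<le> \<xi>h $ i + t * (w $ i / 2)" using v_ph by simp
      moreover have "t * (w $ i / 2) < 0" using elim neg by (simp add: mult_pos_neg)
      ultimately show False by simp
    qed
    then show False by (simp add: eventually_False)
  qed
  define lamOf where "lamOf \<mu> \<nu> = ((\<lambda>k. if k \<in> Act then - \<mu> k else 0), (\<lambda>j. if j \<in> Ih then - \<nu> j else 0))"
    for \<mu> :: "('x, 'l) gidx \<Rightarrow> real" and \<nu> :: "'x \<Rightarrow> real"
  have lamOf_feas: "lp_dualfeas Act Ih AA BB e (lamOf \<mu> \<nu>)"
    if "\<forall>k\<in>Act. 0 \<le> \<mu> k" "- e = (\<Sum>k\<in>Act. \<mu> k *\<^sub>R AA k) + (\<Sum>j\<in>Ih. \<nu> j *\<^sub>R BB j)" for \<mu> \<nu>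
  proof -
    have s1: "(\<Sum>k\<in>Act. fst (lamOf \<mu> \<nu>) k *\<^sub>R AA k) = - (\<Sum>k\<in>Act. \<mu> k *\<^sub>R AA k)"
      by (simp add: lamOf_def sum_negf[symmetric])
    have s2: "(\<Sum>j\<in>Ih. snd (lamOf \<mu> \<nu>) j *\<^sub>R BB j) = - (\<Sum>j\<in>Ih. \<nu> j *\<^sub>R BB j)"
      by (simp add: lamOf_def sum_negf[symmetric])
    have "e = - ((\<Sum>k\<in>Act. \<mu> k *\<^sub>R AA k) + (\<Sum>j\<in>Ih. \<nu> j *\<^sub>R BB j))" using arg_cong[OF that(2), of uminus] by simp
    then show ?thesis using that(1) unfolding lp_dualfeas_def s1 s2 by (auto simp: lamOf_def)
  qed
  have Gt_lamOf: "Gt (lamOf \<mu> \<nu>) \<bullet> d = - ((\<Sum>k\<in>Act. \<mu> k * (GAr k \<bullet> d)) + (\<Sum>j\<in>Ih. \<nu> j * (GBr j \<bullet> d)))" for \<mu> \<nu> d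
    by (simp add: Gt_inner lamOf_def sum_negf[symmetric])
  obtain lam0 where lam0: "lp_dualfeas Act Ih AA BB e lam0"
  proof -
    have "\<exists>\<mu> \<nu>. (\<forall>k\<in>Act. 0 \<le> \<mu> k) \<and> - e = (\<Sum>k\<in>Act. \<mu> k *\<^sub>R AA k) + (\<Sum>j\<in>Ih. \<nu> j *\<^sub>R BB j)"
    proof (rule farkas[OF finAct finIh])
      fix w assume "\<forall>k\<in>Act. AA k \<bullet> w \<le> 0" "\<forall>j\<in>Ih. BB j \<bullet> w = 0"
      then show "- e \<bullet> w \<le> 0" using rec_nonneg e_inner by simp
    qed
    then show ?thesis using that lamOf_feas by blast
  qed
  have WD: "Gt lam \<bullet> d \<le> w $ i"
    if lam: "lp_dualfeas Act Ih AA BB e lam" and wA: "\<forall>k\<in>Act. AA k \<bullet> w \<le> GAr k \<bullet> d"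
      and wB: "\<forall>j\<in>Ih. BB j \<bullet> w = GBr j \<bullet> d" for lam d w
  proof -
    have eeq: "(\<Sum>k\<in>Act. fst lam k *\<^sub>R AA k) + (\<Sum>j\<in>Ih. snd lam j *\<^sub>R BB j) = e"
      using lam by (simp add: lp_dualfeas_def)
    have "Gt lam \<bullet> d = (\<Sum>k\<in>Act. fst lam k * (GAr k \<bullet> d)) + (\<Sum>j\<in>Ih. snd lam j * (GBr j \<bullet> d))"
      by (rule Gt_inner)
    also have "\<dots> \<le> (\<Sum>k\<in>Act. fst lam k * (AA k \<bullet> w)) + (\<Sum>j\<in>Ih. snd lam j * (BB j \<bullet> w))"
    proof (intro add_mono sum_mono)
      fix k assume kA: "k \<in> Act"
      have "fst lam k \<le> 0" using lam kA by (simp add: lp_dualfeas_def)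
      then show "fst lam k * (GAr k \<bullet> d) \<le> fst lam k * (AA k \<bullet> w)" using wA kA by (simp add: mult_left_mono_neg)
    next
      fix j assume "j \<in> Ih" then show "snd lam j * (GBr j \<bullet> d) \<le> snd lam j * (BB j \<bullet> w)" using wB by simp
    qed
    also have "\<dots> = e \<bullet> w" using combo_inner[of "fst lam" AA "snd lam" BB w] unfolding eeq by simp
    finally show ?thesis by (simp add: e_inner)
  qed
  have primal_feas: "\<exists>w. (\<forall>k\<in>Act. AA k \<bullet> w \<le> GAr k \<bullet> d) \<and> (\<forall>j\<in>Ih. BB j \<bullet> w = GBr j \<bullet> d)" for d
  proof -
    obtain r where r: "r > 0" "ball ph r \<subseteq> N" using N(1,2) open_contains_ball by blast
    have np: "0 < norm d + 1" using norm_ge_zero[of d] by linarith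
    define t where "t = r / (norm d + 1)"
    have tp: "t > 0" using r np by (simp add: t_def)
    have "t * norm d < r"
    proof -
      have "t * norm d < t * (norm d + 1)" using tp by simp
      also have "\<dots> = r" using np by (simp add: t_def)
      finally show ?thesis .
    qed
    then have pN: "ph + t *\<^sub>R d \<in> N" using r tp by (auto simp: dist_norm)
    then have pP: "ph + t *\<^sub>R d \<in> P" using N(3) QP by blast
    obtain \<xi>p where xpX: "\<xi>p \<in> X" and xp_h: "\<forall>j\<in>Ih. f (\<xi>p, ph + t *\<^sub>R d) $ j = 0"
      and xp_g: "\<forall>k\<in>K. g k (\<xi>p, ph + t *\<^sub>R d) < 0" using slN pN by blast
    define w where "w = (1 / t) *\<^sub>R (\<xi>p - \<xi>h)"
    have "AA k \<bullet> w \<le> GAr k \<bullet> d" if kA: "k \<in> Act" for k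
    proof -
      have kK: "k \<in> K" using kA ActK by blast
      have "g k (\<xi>h, ph) + AA k \<bullet> (\<xi>p - \<xi>h) - GAr k \<bullet> (ph + t *\<^sub>R d - ph) \<le> g k (\<xi>p, ph + t *\<^sub>R d)"
        by (rule g_ineq[OF kK xpX pP])
      moreover have "g k (\<xi>p, ph + t *\<^sub>R d) < 0" using xp_g kK by blast
      ultimately have "AA k \<bullet> (\<xi>p - \<xi>h) \<le> t * (GAr k \<bullet> d)" using act0[OF kA] by simp
      then have "(1 / t) * (AA k \<bullet> (\<xi>p - \<xi>h)) \<le> (1 / t) * (t * (GAr k \<bullet> d))" using tp
        by (intro mult_left_mono) auto
      then show ?thesis using tp by (simp add: w_def)
    qed
    moreover have "BB j \<bullet> w = GBr j \<bullet> d" if jI: "j \<in> Ih" for j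
    proof -
      have "BB j \<bullet> (\<xi>p - \<xi>h) = t * (GBr j \<bullet> d)"
        using hlin[OF jI, of \<xi>p "ph + t *\<^sub>R d"] xp_h xih_feas(1) jI by simp
      then show ?thesis using tp by (simp add: w_def)
    qed
    ultimately show ?thesis by blast
  qed
  have phi0: "\<exists>L. has_dir_deriv ?v ph d L \<and> is_max_val {lam. lp_dualfeas Act Ih AA BB e lam} (\<lambda>lam. Gt lam \<bullet> d) L" for d
  proof -
    define W where "W = {w. (\<forall>k\<in>Act. AA k \<bullet> w \<le> GAr k \<bullet> d) \<and> (\<forall>j\<in>Ih. BB j \<bullet> w = GBr j \<bullet> d)}"
    have Wne: "(\<lambda>w. w $ i) ` W \<noteq> {}" using primal_feas[of d] by (auto simp: W_def)
    have Wbdd: "bdd_below ((\<lambda>w. w $ i) ` W)"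
      using WD[OF lam0] by (intro bdd_belowI[of _ "Gt lam0 \<bullet> d"]) (auto simp: W_def)
    define Ps where "Ps = Inf ((\<lambda>w. w $ i) ` W)"
    have Ps_le: "Ps \<le> w $ i" if "w \<in> W" for w unfolding Ps_def using that Wbdd by (intro cInf_lower) auto
    have Ps_ge: "Gt lam \<bullet> d \<le> Ps" if "lp_dualfeas Act Ih AA BB e lam" for lam
      unfolding Ps_def using Wne WD[OF that] by (intro cInf_greatest) (auto simp: W_def)
    define K' where "K' = insert None (Some ` Act)"
    define u :: "('x, 'l) gidx option \<Rightarrow> (real^'x) \<times> real"
      where "u opt = (case opt of None \<Rightarrow> (0, -1) | Some k \<Rightarrow> (AA k, - (GAr k \<bullet> d)))" for opt
    define v :: "'x \<Rightarrow> (real^'x) \<times> real" where "v j = (BB j, - (GBr j \<bullet> d))" for j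
    have finK': "finite K'" using finAct by (simp add: K'_def)
    have "\<exists>\<mu> \<nu>. (\<forall>k\<in>K'. 0 \<le> \<mu> k) \<and> (- e, Ps) = (\<Sum>k\<in>K'. \<mu> k *\<^sub>R u k) + (\<Sum>j\<in>Ih. \<nu> j *\<^sub>R v j)"
    proof (rule farkas[OF finK' finIh])
      fix ww :: "(real^'x) \<times> real"
      assume H1: "\<forall>k\<in>K'. u k \<bullet> ww \<le> 0" and H2: "\<forall>j\<in>Ih. v j \<bullet> ww = 0"
      obtain w s where ww: "ww = (w, s)" by (cases ww)
      have s0: "0 \<le> s" using H1 by (simp add: K'_def u_def ww)
      have A1: "AA k \<bullet> w \<le> s * (GAr k \<bullet> d)" if "k \<in> Act" for k
        using H1 that by (simp add: K'_def u_def ww mult.commute)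
      have B1: "BB j \<bullet> w = s * (GBr j \<bullet> d)" if "j \<in> Ih" for j
        using H2 that by (simp add: v_def ww mult.commute)
      have "Ps * s \<le> w $ i"
      proof (cases "s = 0")
        case True
        then show ?thesis using rec_nonneg[of w] A1 B1 by simp
      next
        case False
        then have sp: "s > 0" using s0 by simp
        have "(1 / s) *\<^sub>R w \<in> W"
        proof -
          have "AA k \<bullet> ((1 / s) *\<^sub>R w) \<le> GAr k \<bullet> d" if "k \<in> Act" for k
          proof -
            have "(1 / s) * (AA k \<bullet> w) \<le> (1 / s) * (s * (GAr k \<bullet> d))"
              using A1[OF that] sp by (intro mult_left_mono) auto
            then show ?thesis using sp by simp
          qed
          moreover have "BB j \<bullet> ((1 / s) *\<^sub>R w) = GBr j \<bullet> d" if "j \<in> Ih" for j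
            using B1[OF that] sp by simp
          ultimately show ?thesis by (simp add: W_def)
        qed
        then have "Ps \<le> ((1 / s) *\<^sub>R w) $ i" by (rule Ps_le)
        then have "Ps \<le> w $ i / s" by simp
        then show ?thesis using sp by (simp add: le_divide_eq)
      qed
      then show "(- e, Ps) \<bullet> ww \<le> 0" by (simp add: ww e_inner)
    qed
    then obtain \<mu> \<nu> where mu: "\<forall>k\<in>K'. 0 \<le> \<mu> k"
      and ceq: "(- e, Ps) = (\<Sum>k\<in>K'. \<mu> k *\<^sub>R u k) + (\<Sum>j\<in>Ih. \<nu> j *\<^sub>R v j)" by blast
    have sumK': "(\<Sum>k\<in>K'. \<mu> k *\<^sub>R u k) = \<mu> None *\<^sub>R u None + (\<Sum>k\<in>Act. \<mu> (Some k) *\<^sub>R u (Some k))"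
      using finAct by (simp add: K'_def sum.insert sum.reindex)
    have fsteq: "- e = (\<Sum>k\<in>Act. \<mu> (Some k) *\<^sub>R AA k) + (\<Sum>j\<in>Ih. \<nu> j *\<^sub>R BB j)"
      using arg_cong[OF ceq, of fst] unfolding sumK' by (simp add: fst_sum u_def v_def)
    have sndeq: "Ps = - \<mu> None + ((\<Sum>k\<in>Act. \<mu> (Some k) * (- (GAr k \<bullet> d))) + (\<Sum>j\<in>Ih. \<nu> j * (- (GBr j \<bullet> d))))"
      using arg_cong[OF ceq, of snd] unfolding sumK' by (simp add: snd_sum u_def v_def)
    define lamS where "lamS = lamOf (\<lambda>k. \<mu> (Some k)) \<nu>"
    have lamS_feas: "lp_dualfeas Act Ih AA BB e lamS"
      unfolding lamS_def using mu fsteq by (intro lamOf_feas) (auto simp: K'_def)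
    have "Gt lamS \<bullet> d = Ps + \<mu> None"
      unfolding lamS_def Gt_lamOf using sndeq by (simp add: sum_negf)
    moreover have "0 \<le> \<mu> None" using mu by (simp add: K'_def)
    ultimately have lamS_val: "Gt lamS \<bullet> d = Ps" using Ps_ge[OF lamS_feas] by simp
    have imv: "is_max_val {lam. lp_dualfeas Act Ih AA BB e lam} (\<lambda>lam. Gt lam \<bullet> d) Ps"
      unfolding is_max_val_def using lamS_feas lamS_val Ps_ge by blast
    have "has_dir_deriv ?v ph d Ps"
      unfolding has_dir_deriv_def
    proof (rule tendstoI)
      fix \<epsilon> :: real assume ep: "\<epsilon> > 0"
      define \<eta> where "\<eta> = \<epsilon> / 3"
      have eta: "\<eta> > 0" using ep by (simp add: \<eta>_def)
      obtain w where wW: "w \<in> W" and wlt: "w $ i < Ps + \<eta>"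
        using cInf_lessD[OF Wne, of "Ps + \<eta>"] eta unfolding Ps_def[symmetric] by auto
      have wA: "\<forall>k\<in>Act. AA k \<bullet> w \<le> GAr k \<bullet> d" and wB: "\<forall>j\<in>Ih. BB j \<bullet> w = GBr j \<bullet> d"
        using wW by (auto simp: W_def)
      show "\<forall>\<^sub>F t in at_right 0. dist ((?v (ph + t *\<^sub>R d) - ?v ph) / t) Ps < \<epsilon>"
        using UB[OF wA wB eta] evQ[of d] eventually_at_right_less[of "0::real"]
      proof eventually_elim
        case (elim t)
        have lo: "\<xi>h $ i + t * Ps \<le> ?v (ph + t *\<^sub>R d)"
          using LB[OF lamS_feas elim(2)] lamS_val by (simp add: inner_scaleR_right)
        have q_lo: "Ps \<le> (?v (ph + t *\<^sub>R d) - ?v ph) / t"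
          using lo elim(3) v_ph by (simp add: le_divide_eq mult.commute)
        have q_hi: "(?v (ph + t *\<^sub>R d) - ?v ph) / t \<le> w $ i + \<eta>"
          using elim(1) elim(3) v_ph by (simp add: divide_le_eq mult.commute)
        show ?case using q_lo q_hi wlt ep by (simp add: dist_real_def \<eta>_def abs_if)
      qed
    qed
    then show ?thesis using imv by blast
  qed
  have lip: "\<exists>U C. open U \<and> ph \<in> U \<and> C-lipschitz_on U ?v"
  proof -
    define r where "r = rQ / 2"
    have r: "r > 0" "ball ph (2 * r) \<subseteq> Q" using rQ by (auto simp: r_def)
    have cvx: "convex_on (ball ph (2 * r)) ?v"
    proof (rule convex_onI)
      fix t :: real and x y assume t: "0 < t" "t < 1" and xb: "x \<in> ball ph (2 * r)" and yb: "y \<in> ball ph (2 * r)"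
      have xQ: "x \<in> Q" and yQ: "y \<in> Q" using xb yb r by auto
      have pQ: "(1 - t) *\<^sub>R x + t *\<^sub>R y \<in> Q"
        using r(2) convexD[OF convex_ball xb yb, of "1 - t" t] t by auto
      show "?v ((1 - t) *\<^sub>R x + t *\<^sub>R y) \<le> (1 - t) * ?v x + t * ?v y"
      proof (rule field_le_epsilon)
        fix \<epsilon> :: real assume ep: "0 < \<epsilon>"
        obtain y1 where y1: "y1 \<in> Sset x" "y1 < ?v x + \<epsilon>"
          using cInf_lessD[OF S_ne[OF xQ], of "?v x + \<epsilon>"] ep v_eq[of x] by auto
        obtain \<xi>1 where x1: "y1 = \<xi>1 $ i" "\<xi>1 \<in> X" "\<forall>k. fcv (\<xi>1, x) $ k \<le> 0 \<and> 0 \<le> fcc (\<xi>1, x) $ k"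
          using y1(1) unfolding Sset_def by blast
        obtain y2 where y2: "y2 \<in> Sset y" "y2 < ?v y + \<epsilon>"
          using cInf_lessD[OF S_ne[OF yQ], of "?v y + \<epsilon>"] ep v_eq[of y] by auto
        obtain \<xi>2 where x2: "y2 = \<xi>2 $ i" "\<xi>2 \<in> X" "\<forall>k. fcv (\<xi>2, y) $ k \<le> 0 \<and> 0 \<le> fcc (\<xi>2, y) $ k"
          using y2(1) unfolding Sset_def by blast
        have z1: "(\<xi>1, x) \<in> X \<times> P" and z2: "(\<xi>2, y) \<in> X \<times> P" using x1 x2 xQ yQ QP by auto
        define \<xi> where "\<xi> = (1 - t) *\<^sub>R \<xi>1 + t *\<^sub>R \<xi>2"
        have comb: "(1 - t) *\<^sub>R (\<xi>1, x) + t *\<^sub>R (\<xi>2, y) = (\<xi>, (1 - t) *\<^sub>R x + t *\<^sub>R y)"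
          by (simp add: \<xi>_def)
        have "(\<xi>, (1 - t) *\<^sub>R x + t *\<^sub>R y) \<in> X \<times> P"
          using convexD[OF XP_convex z1 z2, of "1 - t" t] t comb by simp
        then have xiX: "\<xi> \<in> X" by simp
        have cnd: "fcv (\<xi>, (1 - t) *\<^sub>R x + t *\<^sub>R y) $ k \<le> 0 \<and> 0 \<le> fcc (\<xi>, (1 - t) *\<^sub>R x + t *\<^sub>R y) $ k" for k
        proof
          have "fcv (\<xi>, (1 - t) *\<^sub>R x + t *\<^sub>R y) $ k \<le> (1 - t) * fcv (\<xi>1, x) $ k + t * fcv (\<xi>2, y) $ k"
            using convex_onD[OF fcv_convex[rule_format, of k], of t "(\<xi>1, x)" "(\<xi>2, y)"] t z1 z2 comb by simp
          also have "\<dots> \<le> 0" using x1(3) x2(3) t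
            by (intro add_nonpos_nonpos mult_nonneg_nonpos) auto
          finally show "fcv (\<xi>, (1 - t) *\<^sub>R x + t *\<^sub>R y) $ k \<le> 0" .
          have "(1 - t) * fcc (\<xi>1, x) $ k + t * fcc (\<xi>2, y) $ k \<le> fcc (\<xi>, (1 - t) *\<^sub>R x + t *\<^sub>R y) $ k"
            using concave_onD[OF fcc_concave[rule_format, of k], of t "(\<xi>1, x)" "(\<xi>2, y)"] t z1 z2 comb by simp
          moreover have "0 \<le> (1 - t) * fcc (\<xi>1, x) $ k + t * fcc (\<xi>2, y) $ k" using x1(3) x2(3) t
            by (intro add_nonneg_nonneg mult_nonneg_nonneg) auto
          ultimately show "0 \<le> fcc (\<xi>, (1 - t) *\<^sub>R x + t *\<^sub>R y) $ k" by linarith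
        qed
        have "?v ((1 - t) *\<^sub>R x + t *\<^sub>R y) \<le> \<xi> $ i" using v_le[OF xiX] cnd by blast
        also have "\<dots> = (1 - t) * y1 + t * y2" by (simp add: \<xi>_def x1 x2)
        also have "\<dots> \<le> (1 - t) * (?v x + \<epsilon>) + t * (?v y + \<epsilon>)"
          using y1 y2 t by (intro add_mono mult_left_mono) auto
        also have "\<dots> = (1 - t) * ?v x + t * ?v y + \<epsilon>" by (simp add: algebra_simps)
        finally show "?v ((1 - t) *\<^sub>R x + t *\<^sub>R y) \<le> (1 - t) * ?v x + t * ?v y + \<epsilon>" .
      qed
    qed simp
    have bnd: "?v x - ?v y \<le> xU $ i - xL $ i" if "x \<in> ball ph (2 * r)" "y \<in> ball ph (2 * r)" for x y
    proof -
      have "x \<in> Q" "y \<in> Q" using that r(2) by auto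
      then show ?thesis using v_hi[of x] v_lo[of y] by linarith
    qed
    have "((xU $ i - xL $ i) / r)-lipschitz_on (ball ph r) ?v"
      by (rule convex_lipschitz_ball[OF cvx r(1) bnd])
    then show ?thesis using r(1) by (intro exI[of _ "ball ph r"] exI[of _ "(xU $ i - xL $ i) / r"]) auto
  qed
  define F0 where "F0 = {lam. lp_dualfeas Act Ih AA BB e lam}"
  have T0_poly: "polyhedron (Gt ` F0)"
  proof -
    define Comb where "Comb = {(\<Sum>k\<in>Act. \<mu> k *\<^sub>R (- AA k, - GAr k)) + (\<Sum>j\<in>Ih. \<nu> j *\<^sub>R (BB j, GBr j)) | \<mu> \<nu>. \<forall>k\<in>Act. 0 \<le> \<mu> k}"
    have pc: "polyhedron Comb"
      unfolding Comb_def by (rule combo_cone(1)[OF finAct finIh])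
    have "Gt ` F0 = {t. (e, t) \<in> Comb}"
    proof (intro set_eqI iffI)
      fix t assume "t \<in> Gt ` F0"
      then obtain lam where lam: "lp_dualfeas Act Ih AA BB e lam" and t: "t = Gt lam" by (auto simp: F0_def)
      have "(e, t) = (\<Sum>k\<in>Act. (- fst lam k) *\<^sub>R (- AA k, - GAr k)) + (\<Sum>j\<in>Ih. snd lam j *\<^sub>R (BB j, GBr j))"
        using lam unfolding sum_pair_scaleR t Gt_def lp_dualfeas_def by simp
      moreover have "\<forall>k\<in>Act. 0 \<le> - fst lam k" using lam by (simp add: lp_dualfeas_def)
      ultimately show "t \<in> {t. (e, t) \<in> Comb}" unfolding Comb_def mem_Collect_eq
        by (intro exI[of _ "\<lambda>k. - fst lam k"] exI[of _ "snd lam"] conjI)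
    next
      fix t assume "t \<in> {t. (e, t) \<in> Comb}"
      then obtain \<mu> \<nu> where mu: "\<forall>k\<in>Act. 0 \<le> \<mu> k"
        and et: "(e, t) = (\<Sum>k\<in>Act. \<mu> k *\<^sub>R (- AA k, - GAr k)) + (\<Sum>j\<in>Ih. \<nu> j *\<^sub>R (BB j, GBr j))"
        unfolding Comb_def by blast
      define lam where "lam = ((\<lambda>k. if k \<in> Act then - \<mu> k else 0), (\<lambda>j. if j \<in> Ih then \<nu> j else 0))"
      have s1: "(\<Sum>k\<in>Act. fst lam k *\<^sub>R AA k) = (\<Sum>k\<in>Act. \<mu> k *\<^sub>R (- AA k))"
        by (rule sum.cong) (auto simp: lam_def)
      have s2: "(\<Sum>j\<in>Ih. snd lam j *\<^sub>R BB j) = (\<Sum>j\<in>Ih. \<nu> j *\<^sub>R BB j)"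
        by (rule sum.cong) (auto simp: lam_def)
      have s3: "(\<Sum>k\<in>Act. fst lam k *\<^sub>R GAr k) = (\<Sum>k\<in>Act. \<mu> k *\<^sub>R (- GAr k))"
        by (rule sum.cong) (auto simp: lam_def)
      have s4: "(\<Sum>j\<in>Ih. snd lam j *\<^sub>R GBr j) = (\<Sum>j\<in>Ih. \<nu> j *\<^sub>R GBr j)"
        by (rule sum.cong) (auto simp: lam_def)
      have ee: "e = (\<Sum>k\<in>Act. \<mu> k *\<^sub>R (- AA k)) + (\<Sum>j\<in>Ih. \<nu> j *\<^sub>R BB j)"
        and tt: "t = (\<Sum>k\<in>Act. \<mu> k *\<^sub>R (- GAr k)) + (\<Sum>j\<in>Ih. \<nu> j *\<^sub>R GBr j)"
        using et unfolding sum_pair_scaleR by simp_all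
      have "lp_dualfeas Act Ih AA BB e lam"
        unfolding lp_dualfeas_def s1 s2 using ee mu by (auto simp: lam_def)
      moreover have "Gt lam = t" unfolding Gt_def s3 s4 tt ..
      ultimately show "t \<in> Gt ` F0" unfolding F0_def by blast
    qed
    then show ?thesis using polyhedron_slice[OF pc, of e] by simp
  qed
  have ms_all: "(let \<phi> = ld_seq ?v ph ms;
          F = lp_feas Act Ih AA BB (axis i 1) GAr GBr ms \<phi>;
          D = (\<lambda>j. argmax_set (F j) (\<lambda>lam. lp_obj Act Ih GAr GBr lam (ms ! j)))
      in (\<forall>j \<le> length ms. \<forall>d. is_max_val (F j) (\<lambda>lam. lp_obj Act Ih GAr GBr lam d) (\<phi> j d)) \<and>
         (\<forall>j \<in> {1..<length ms}.
            D j = argmax_set (D (j - 1)) (\<lambda>lam. lp_obj Act Ih GAr GBr lam (ms ! j)) \<and>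
            D j \<subseteq> D (j - 1)) \<and>
         (ms \<noteq> [] \<longrightarrow> (\<forall>lam \<in> D (length ms - 1).
            ld_deriv ?v ph ms =
              map (\<lambda>q. lp_obj Act Ih GAr GBr lam (ms ! q)) [0..<length ms]))) \<and>
      (\<forall>j<length ms. \<forall>d. \<exists>L. has_dir_deriv (ld_seq ?v ph ms j) (ms ! j) d L)" for ms
  proof -
    define \<phi> where "\<phi> = ld_seq ?v ph ms"
    define F where "F = lp_feas Act Ih AA BB (axis i 1) GAr GBr ms \<phi>"
    have F_0: "F 0 = F0" by (simp add: F_def F0_def lp_feas_def e_def)
    have Fsuc: "F (Suc j) = {lam \<in> F j. \<phi> j (ms ! j) \<le> Gt lam \<bullet> (ms ! j)}" for j
    proof -
      have "{1..Suc j} = insert (Suc j) {1..j}" by auto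
      then show ?thesis unfolding F_def lp_feas_def by (auto simp: obj_eq)
    qed
    have Fanti: "F j' \<subseteq> F j" if "j \<le> j'" for j j'
      using that
    proof (induction j' rule: dec_induct)
      case base then show ?case by simp
    next
      case (step n) then show ?case using Fsuc[of n] by auto
    qed
    have Tpoly: "polyhedron (Gt ` F j)" for j
    proof (induction j)
      case 0 then show ?case using T0_poly by (simp add: F_0)
    next
      case (Suc j)
      have eq: "Gt ` F (Suc j) = Gt ` F j \<inter> {t. (ms ! j) \<bullet> t \<ge> \<phi> j (ms ! j)}"
        unfolding Fsuc by (auto simp: inner_commute)
      have hs: "polyhedron {t. (ms ! j) \<bullet> t \<ge> \<phi> j (ms ! j)}" by (rule polyhedron_halfspace_ge)
      show ?case unfolding eq using Suc.IH hs by (rule polyhedron_Int)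
    qed
    have step: "\<exists>t0\<in>Gt ` F j. t0 \<bullet> (ms ! j) = \<phi> j (ms ! j) \<and>
        (\<forall>t\<in>Gt ` F j. t \<bullet> (ms ! j) = \<phi> j (ms ! j) \<longrightarrow> t \<bullet> d \<le> t0 \<bullet> d) \<and>
        has_dir_deriv (\<phi> j) (ms ! j) d (t0 \<bullet> d)"
      if H: "\<forall>d. is_max_val (F j) (\<lambda>lam. Gt lam \<bullet> d) (\<phi> j d)" for j d
    proof (rule danskin_poly[OF Tpoly])
      fix d' show "is_max_val (Gt ` F j) (\<lambda>t. t \<bullet> d') (\<phi> j d')"
        using H[rule_format, of d'] by (auto simp: is_max_val_def)
    qed
    have IND: "\<forall>d. is_max_val (F j) (\<lambda>lam. Gt lam \<bullet> d) (\<phi> j d)" if "j \<le> length ms" for j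
      using that
    proof (induction j)
      case 0
      show ?case
      proof
        fix d
        obtain L where L: "has_dir_deriv ?v ph d L" "is_max_val F0 (\<lambda>lam. Gt lam \<bullet> d) L"
          using phi0[of d] unfolding F0_def by blast
        have "\<phi> 0 d = L" using dir_deriv_eq[OF L(1)] by (simp add: \<phi>_def)
        then show "is_max_val (F 0) (\<lambda>lam. Gt lam \<bullet> d) (\<phi> 0 d)" using L(2) by (simp add: F_0)
      qed
    next
      case (Suc j)
      then have IH: "\<forall>d. is_max_val (F j) (\<lambda>lam. Gt lam \<bullet> d) (\<phi> j d)" by simp
      show ?case
      proof
        fix d
        obtain t0 where t0: "t0 \<in> Gt ` F j" "t0 \<bullet> (ms ! j) = \<phi> j (ms ! j)"
          and t0max: "\<forall>t\<in>Gt ` F j. t \<bullet> (ms ! j) = \<phi> j (ms ! j) \<longrightarrow> t \<bullet> d \<le> t0 \<bullet> d"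
          and t0d: "has_dir_deriv (\<phi> j) (ms ! j) d (t0 \<bullet> d)"
          using step[OF IH, of d] by blast
        have phis: "\<phi> (Suc j) d = t0 \<bullet> d" using dir_deriv_eq[OF t0d] by (simp add: \<phi>_def)
        obtain lam1 where lam1: "lam1 \<in> F j" "t0 = Gt lam1" using t0(1) by blast
        have lam1S: "lam1 \<in> F (Suc j)" using lam1 t0(2) by (simp add: Fsuc)
        have "Gt lam \<bullet> d \<le> t0 \<bullet> d" if lS: "lam \<in> F (Suc j)" for lam
        proof -
          have lF: "lam \<in> F j" and ge: "\<phi> j (ms ! j) \<le> Gt lam \<bullet> (ms ! j)" using lS by (auto simp: Fsuc)
          have "Gt lam \<bullet> (ms ! j) \<le> \<phi> j (ms ! j)" using IH lF by (auto simp: is_max_val_def)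
          then have "Gt lam \<bullet> (ms ! j) = \<phi> j (ms ! j)" using ge by simp
          then show ?thesis using t0max lF by blast
        qed
        then show "is_max_val (F (Suc j)) (\<lambda>lam. Gt lam \<bullet> d) (\<phi> (Suc j) d)"
          unfolding is_max_val_def phis using lam1S lam1(2) by blast
      qed
    qed
    have A: "\<forall>j \<le> length ms. \<forall>d. is_max_val (F j) (\<lambda>lam. lp_obj Act Ih GAr GBr lam d) (\<phi> j d)"
      using IND by (simp add: obj_eq)
    have dd: "\<forall>j<length ms. \<forall>d. \<exists>L. has_dir_deriv (\<phi> j) (ms ! j) d L"
      using step IND by (meson less_imp_le)
    have Fsuc_arg: "F (Suc j) = argmax_set (F j) (\<lambda>lam. lp_obj Act Ih GAr GBr lam (ms ! j))"
      if "j < length ms" for j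
    proof -
      have imv: "is_max_val (F j) (\<lambda>lam. Gt lam \<bullet> (ms ! j)) (\<phi> j (ms ! j))" using IND that by simp
      show ?thesis
        unfolding Fsuc argmax_set_def obj_eq using imv unfolding is_max_val_def
        by (auto intro: order_trans)
    qed
    have B: "\<forall>j \<in> {1..<length ms}.
            argmax_set (F j) (\<lambda>lam. lp_obj Act Ih GAr GBr lam (ms ! j)) =
              argmax_set (argmax_set (F (j - 1)) (\<lambda>lam. lp_obj Act Ih GAr GBr lam (ms ! (j - 1))))
                (\<lambda>lam. lp_obj Act Ih GAr GBr lam (ms ! j)) \<and>
            argmax_set (F j) (\<lambda>lam. lp_obj Act Ih GAr GBr lam (ms ! j)) \<subseteq>
              argmax_set (F (j - 1)) (\<lambda>lam. lp_obj Act Ih GAr GBr lam (ms ! (j - 1)))"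
    proof
      fix j assume j: "j \<in> {1..<length ms}"
      then obtain j' where j': "j = Suc j'" "j' < length ms" by (cases j) auto
      have "F j = argmax_set (F (j - 1)) (\<lambda>lam. lp_obj Act Ih GAr GBr lam (ms ! (j - 1)))"
        using Fsuc_arg[OF j'(2)] j'(1) by simp
      then show "argmax_set (F j) (\<lambda>lam. lp_obj Act Ih GAr GBr lam (ms ! j)) =
              argmax_set (argmax_set (F (j - 1)) (\<lambda>lam. lp_obj Act Ih GAr GBr lam (ms ! (j - 1))))
                (\<lambda>lam. lp_obj Act Ih GAr GBr lam (ms ! j)) \<and>
            argmax_set (F j) (\<lambda>lam. lp_obj Act Ih GAr GBr lam (ms ! j)) \<subseteq>
              argmax_set (F (j - 1)) (\<lambda>lam. lp_obj Act Ih GAr GBr lam (ms ! (j - 1)))"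
        by (auto simp: argmax_set_def)
    qed
    have C: "ms \<noteq> [] \<longrightarrow> (\<forall>lam \<in> argmax_set (F (length ms - 1)) (\<lambda>lam. lp_obj Act Ih GAr GBr lam (ms ! (length ms - 1))).
            ld_deriv ?v ph ms = map (\<lambda>q. lp_obj Act Ih GAr GBr lam (ms ! q)) [0..<length ms])"
    proof (intro impI ballI)
      fix lam assume ne: "ms \<noteq> []"
        and lamD: "lam \<in> argmax_set (F (length ms - 1)) (\<lambda>lam. lp_obj Act Ih GAr GBr lam (ms ! (length ms - 1)))"
      define n where "n = length ms - 1"
      have n: "Suc n = length ms" using ne by (simp add: n_def)
      have lamF: "lam \<in> F n" and lamM: "\<forall>y\<in>F n. Gt y \<bullet> (ms ! n) \<le> Gt lam \<bullet> (ms ! n)"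
        using lamD by (auto simp: argmax_set_def obj_eq n_def)
      have val: "\<phi> q (ms ! q) = Gt lam \<bullet> (ms ! q)" if q: "q < length ms" for q
      proof (cases "q = n")
        case True
        have imv: "is_max_val (F n) (\<lambda>lam. Gt lam \<bullet> (ms ! n)) (\<phi> n (ms ! n))" using IND n by simp
        then obtain lam' where "lam' \<in> F n" "Gt lam' \<bullet> (ms ! n) = \<phi> n (ms ! n)" unfolding is_max_val_def by blast
        then have "\<phi> n (ms ! n) \<le> Gt lam \<bullet> (ms ! n)" using lamM by metis
        moreover have "Gt lam \<bullet> (ms ! n) \<le> \<phi> n (ms ! n)" using imv lamF unfolding is_max_val_def by blast
        ultimately show ?thesis using True by simp
      next
        case False
        then have "Suc q \<le> n" using q n by simp
        then have "lam \<in> F (Suc q)" using Fanti lamF by blast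
        then have ge: "\<phi> q (ms ! q) \<le> Gt lam \<bullet> (ms ! q)" and lq: "lam \<in> F q" by (auto simp: Fsuc)
        have "Gt lam \<bullet> (ms ! q) \<le> \<phi> q (ms ! q)" using IND[of q] q lq unfolding is_max_val_def by auto
        then show ?thesis using ge by simp
      qed
      show "ld_deriv ?v ph ms = map (\<lambda>q. lp_obj Act Ih GAr GBr lam (ms ! q)) [0..<length ms]"
        unfolding ld_deriv_def \<phi>_def[symmetric] obj_eq using val by simp
    qed
    show ?thesis
      unfolding Let_def \<phi>_def[symmetric] F_def[symmetric] using A B C dd by blast
  qed
  have ms2: "\<forall>ms. \<forall>j<length ms. \<forall>d. \<exists>L. has_dir_deriv (ld_seq ?v ph ms j) (ms ! j) d L"
    using ms_all by blast
  have ld0: "\<forall>d. \<exists>L. has_dir_deriv ?v ph d L" using phi0 by blast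
  have Ls: "L_smooth_at ?v ph" unfolding L_smooth_at_def using lip ld0 ms2 by blast
  show ?thesis
    apply (rule conjI[OF Ls])
    apply (rule allI)
    apply (rule conjunct1[OF ms_all])
    done
qed

end
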